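(* Let $(E,\|\cdot\|)$ be a real Banach space and $\mathcal{C}\subset E$ a closed convex cone with $\mathbb{R}_+\mathcal{C}=\mathcal{C}$, $\mathcal{C}\cap(-\mathcal{C})=\{0\}$. Assume (H1): there are $\ell\in E'$, $\|\ell\|=1$, and $K\in[1,\infty)$ with $\langle\ell,\phi\rangle\ge\frac1K\|\phi\|$ for $\phi\in\mathcal{C}$; (H2): $\rho\in(0,1]$ is fixed with $\mathcal{C}(\rho)=\{\phi\in\mathcal{C}:B(\phi,\rho\|\phi\|)\subset\mathcal{C}\}\ne\{0\}$. Let $\mathcal{C}_{\ell=1}(\rho)=\{\phi\in\mathcal{C}(\rho):\langle\ell,\phi\rangle=1\}$, let $\Delta=\sup\{d_{\mathcal{C}}(x,y):x,y\in\mathcal{C}(\rho)\setminus\{0\}\}$ and $\eta=\tanh(\Delta/4)$. Let $\mathcal{M}\subset L(E)$ satisfy, for some $1\le\vartheta<\infty$ and all $L\in\mathcal{M}$: (H3) $L(\mathcal{C}\setminus\{0\})\subset\mathcal{C}(\rho)\setminus\{0\}$; (H4) $\frac1\vartheta\le\|L\|\le\vartheta$. Let $(\Omega,\mathcal{F},\mathbb{P})$ be a probability space with invertible, measure-preserving, ergodic $\tau$; $X=L^\infty(\Omega,E)$ (uniformly bounded Bochner measurable sections, sup norm); $(\mathcal{L}_\omega)_\omega$ with values in $\mathcal{M}$ such that $\mathbf{L}:X\to X$, $(\mathbf{L}\boldsymbol{z})_\omega=\mathcal{L}_{\tau^{-1}\omega}z_{\tau^{-1}\omega}$, preserves Bochner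 measurability. For $\boldsymbol{z}\in X$ let $\Lambda(\boldsymbol z)_\omega=\langle\ell,\mathcal{L}_{\tau^{-1}\omega}z_{\tau^{-1}\omega}\rangle$, and whenever $\Lambda(\boldsymbol\phi)$ is bounded away from $0$ let $\boldsymbol\pi(\boldsymbol\phi)=\Lambda(\boldsymbol\phi)^{-1}\mathbf{L}\boldsymbol\phi$ (fiberwise multiplication). For $\boldsymbol\phi\in X$ with values in $\mathcal{C}_{\ell=1}(\rho)$ define $\mathbf{Q}(\boldsymbol\phi)\in L(X)$ by \[\mathbf{Q}(\boldsymbol\phi)\boldsymbol z=\Lambda(\boldsymbol\phi)^{-1}\big(\mathbf{L}\boldsymbol z-\Lambda(\boldsymbol z)\boldsymbol\pi(\boldsymbol\phi)\big).\] Then there is $C=C(\rho,K,\vartheta)>0$ such that for every $\boldsymbol\phi\in X$ with values in $\mathcal{C}_{\ell=1}(\rho)$ and every $\boldsymbol z\in X$ with $\|\boldsymbol z\|<\frac{\rho}{2\vartheta^2K}$, \[\|\boldsymbol\pi(\boldsymbol\phi+\boldsymbol z)-\boldsymbol\pi(\boldsymbol\phi)-\mathbf{Q}(\boldsymbol\phi)\boldsymbol z\|\le C\|\boldsymbol z\|^2,\] so $\mathbf{Q}(\boldsymbol\phi)$ is the derivative of $\boldsymbol\pi$ at $\boldsymbol\phi$. Moreover, if $\mathbf{f}\in X$ is the fixed point of $\boldsymbol\pi$ with values in $\mathcal{C}_{\ell=1}(\rho)$, then $\mathbf{1}-\mathbf{Q}(\mathbf{f})$ is invertible in $L(X)$ with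 $\|(\mathbf{1}-\mathbf{Q}(\mathbf{f}))^{-1}\|\le1+\frac{K/\rho}{1-\eta}$.
   Context: Hilbert projective metric: for $x,y\in\mathcal{C}\setminus\{0\}$, $\delta(x,y)=\inf\{t>0:tx-y\in\mathcal{C}\}$ and $d_{\mathcal{C}}(x,y)=\log(\delta(x,y)\delta(y,x))\in[0,+\infty]$. Bochner measurable means uniform limit of measurable countably-valued maps. *)

theory Defs
  imports "HOL-Probability.Probability"
begin

definition rho_interior :: "'e::real_normed_vector set \<Rightarrow> real \<Rightarrow> 'e set" where
  "rho_interior C \<rho> = {\<phi> \<in> C. ball \<phi> (\<rho> * norm \<phi>) \<subseteq> C}"

definition normalized_part :: "'e::real_normed_vector set \<Rightarrow> real \<Rightarrow> ('e \<Rightarrow> real) \<Rightarrow> 'e set" where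
  "normalized_part C \<rho> lf = {\<phi> \<in> rho_interior C \<rho>. lf \<phi> = 1}"

text \<open>delta(x,y) = inf {t>0. t x - y in C}, valued in [0,+infinity] (inf of the empty set = +infinity).\<close>
definition hdelta :: "'e::real_normed_vector set \<Rightarrow> 'e \<Rightarrow> 'e \<Rightarrow> ereal" where
  "hdelta C x y = Inf {ereal t | t. t > 0 \<and> t *\<^sub>R x - y \<in> C}"

definition hilbert_dist :: "'e::real_normed_vector set \<Rightarrow> 'e \<Rightarrow> 'e \<Rightarrow> ereal" where
  "hilbert_dist C x y =
     (if hdelta C x y = \<infinity> \<or> hdelta C y x = \<infinity> then \<infinity>
      else ereal (ln (real_of_ereal (hdelta C x y) * real_of_ereal (hdelta C y x))))"

definition hilbert_diam :: "'e::real_normed_vector set \<Rightarrow> real \<Rightarrow> ereal" where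
  "hilbert_diam C \<rho> = (SUP p \<in> (rho_interior C \<rho> - {0}) \<times> (rho_interior C \<rho> - {0}).
                          hilbert_dist C (fst p) (snd p))"

definition eta_const :: "'e::real_normed_vector set \<Rightarrow> real \<Rightarrow> real" where
  "eta_const C \<rho> = (if hilbert_diam C \<rho> = \<infinity> then 1 else tanh (real_of_ereal (hilbert_diam C \<rho>) / 4))"

definition measure_preserving_map :: "'w measure \<Rightarrow> ('w \<Rightarrow> 'w) \<Rightarrow> bool" where
  "measure_preserving_map M T \<longleftrightarrow> T \<in> measurable M M \<and> distr M M T = M"

definition ergodic_map :: "'w measure \<Rightarrow> ('w \<Rightarrow> 'w) \<Rightarrow> bool" where
  "ergodic_map M T \<longleftrightarrow> (\<forall>A \<in> sets M. T -` A \<inter> space M = A \<longrightarrow> measure M A = 0 \<or> measure M A = 1)"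

definition bochner_meas :: "'w measure \<Rightarrow> ('w \<Rightarrow> 'e::real_normed_vector) \<Rightarrow> bool" where
  "bochner_meas M z \<longleftrightarrow>
     (\<exists>s :: nat \<Rightarrow> 'w \<Rightarrow> 'e.
        (\<forall>n. countable (s n ` space M) \<and> (\<forall>v. s n -` {v} \<inter> space M \<in> sets M)) \<and>
        (\<forall>\<epsilon>>0. \<exists>N. \<forall>n\<ge>N. \<forall>\<omega>\<in>space M. norm (s n \<omega> - z \<omega>) < \<epsilon>))"

text \<open>The space X = L-infinity(Omega,E): uniformly bounded Bochner measurable sections.
  Sections are taken extensional (zero outside space M), so that X is a space of functions.\<close>
definition Xsp :: "'w measure \<Rightarrow> ('w \<Rightarrow> 'e::real_normed_vector) set" where
  "Xsp M = {z. bochner_meas M z \<and> bounded (z ` space M) \<and> (\<forall>\<omega>. \<omega> \<notin> space M \<longrightarrow> z \<omega> = 0)}"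

definition supn :: "'w measure \<Rightarrow> ('w \<Rightarrow> 'e::real_normed_vector) \<Rightarrow> real" where
  "supn M z = (SUP \<omega> \<in> space M. norm (z \<omega>))"

definition Lop :: "'w measure \<Rightarrow> ('w \<Rightarrow> 'w) \<Rightarrow> ('w \<Rightarrow> 'e \<Rightarrow> 'e::real_normed_vector) \<Rightarrow> ('w \<Rightarrow> 'e) \<Rightarrow> 'w \<Rightarrow> 'e" where
  "Lop M \<tau>i \<L> z = (\<lambda>\<omega>. if \<omega> \<in> space M then \<L> (\<tau>i \<omega>) (z (\<tau>i \<omega>)) else 0)"

definition Lam :: "'w measure \<Rightarrow> ('e \<Rightarrow> real) \<Rightarrow> ('w \<Rightarrow> 'w) \<Rightarrow> ('w \<Rightarrow> 'e \<Rightarrow> 'e::real_normed_vector) \<Rightarrow> ('w \<Rightarrow> 'e) \<Rightarrow> 'w \<Rightarrow> real" where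
  "Lam M lf \<tau>i \<L> z = (\<lambda>\<omega>. lf (Lop M \<tau>i \<L> z \<omega>))"

definition piop :: "'w measure \<Rightarrow> ('e \<Rightarrow> real) \<Rightarrow> ('w \<Rightarrow> 'w) \<Rightarrow> ('w \<Rightarrow> 'e \<Rightarrow> 'e::real_normed_vector) \<Rightarrow> ('w \<Rightarrow> 'e) \<Rightarrow> 'w \<Rightarrow> 'e" where
  "piop M lf \<tau>i \<L> \<phi> = (\<lambda>\<omega>. (1 / Lam M lf \<tau>i \<L> \<phi> \<omega>) *\<^sub>R Lop M \<tau>i \<L> \<phi> \<omega>)"

definition Qop :: "'w measure \<Rightarrow> ('e \<Rightarrow> real) \<Rightarrow> ('w \<Rightarrow> 'w) \<Rightarrow> ('w \<Rightarrow> 'e \<Rightarrow> 'e::real_normed_vector) \<Rightarrow> ('w \<Rightarrow> 'e) \<Rightarrow> ('w \<Rightarrow> 'e) \<Rightarrow> 'w \<Rightarrow> 'e" where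
  "Qop M lf \<tau>i \<L> \<phi> z = (\<lambda>\<omega>. (1 / Lam M lf \<tau>i \<L> \<phi> \<omega>) *\<^sub>R
       (Lop M \<tau>i \<L> z \<omega> - Lam M lf \<tau>i \<L> z \<omega> *\<^sub>R piop M lf \<tau>i \<L> \<phi> \<omega>))"

definition cone_setting :: "'e::banach set \<Rightarrow> ('e \<Rightarrow> real) \<Rightarrow> real \<Rightarrow> real \<Rightarrow> bool" where
  "cone_setting C lf K \<rho> \<longleftrightarrow>
     closed C \<and> convex C \<and> cone C \<and> C \<inter> uminus ` C = {0} \<and>
     \<comment> \<open>(H1)\<close>
     bounded_linear lf \<and> onorm lf = 1 \<and> 1 \<le> K \<and> (\<forall>\<phi>\<in>C. lf \<phi> \<ge> norm \<phi> / K) \<and>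
     \<comment> \<open>(H2)\<close>
     0 < \<rho> \<and> \<rho> \<le> 1 \<and> rho_interior C \<rho> \<noteq> {0}"

definition operator_class :: "'e::banach set \<Rightarrow> real \<Rightarrow> real \<Rightarrow> ('e \<Rightarrow> 'e) set" where
  "operator_class C \<rho> \<theta> =
     {L. bounded_linear L \<and>
         L ` (C - {0}) \<subseteq> rho_interior C \<rho> - {0} \<and>   \<comment> \<open>(H3)\<close>
         1 / \<theta> \<le> onorm L \<and> onorm L \<le> \<theta>}"

definition full_setting ::
  "'e::banach set \<Rightarrow> ('e \<Rightarrow> real) \<Rightarrow> real \<Rightarrow> real \<Rightarrow> real \<Rightarrow> ('e \<Rightarrow> 'e) set \<Rightarrow>
   'w measure \<Rightarrow> ('w \<Rightarrow> 'w) \<Rightarrow> ('w \<Rightarrow> 'w) \<Rightarrow> ('w \<Rightarrow> 'e \<Rightarrow> 'e) \<Rightarrow> bool" where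
  "full_setting C lf K \<rho> \<theta> \<M> M \<tau> \<tau>i \<L> \<longleftrightarrow>
     cone_setting C lf K \<rho> \<and> 1 \<le> \<theta> \<and> \<M> \<subseteq> operator_class C \<rho> \<theta> \<and>
     prob_space M \<and>
     \<comment> \<open>tau invertible with inverse tau_i, measure preserving, ergodic\<close>
     (\<forall>\<omega>\<in>space M. \<tau> \<omega> \<in> space M \<and> \<tau>i \<omega> \<in> space M \<and> \<tau>i (\<tau> \<omega>) = \<omega> \<and> \<tau> (\<tau>i \<omega>) = \<omega>) \<and>
     measure_preserving_map M \<tau> \<and> measure_preserving_map M \<tau>i \<and> ergodic_map M \<tau> \<and>
     (\<forall>\<omega>\<in>space M. \<L> \<omega> \<in> \<M>) \<and>
     (\<forall>z\<in>Xsp M. bochner_meas M (Lop M \<tau>i \<L> z))"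

end

theory Submission
  imports Defs
begin

definition cvm :: "'w measure \<Rightarrow> ('w \<Rightarrow> 'b) \<Rightarrow> bool" where
  "cvm M s \<longleftrightarrow> countable (s ` space M) \<and> (\<forall>v. s -` {v} \<inter> space M \<in> sets M)"

lemma bm_char:
  "bochner_meas M z \<longleftrightarrow>
    (\<forall>\<epsilon>>0. \<exists>s. cvm M s \<and> (\<forall>\<omega>\<in>space M. norm (s \<omega> - z \<omega>) < \<epsilon>))"
proof
  assume "bochner_meas M z"
  then have "\<exists>s :: nat \<Rightarrow> _. (\<forall>n. countable (s n ` space M) \<and> (\<forall>v. s n -` {v} \<inter> space M \<in> sets M)) \<and>
    (\<forall>\<epsilon>>0. \<exists>N. \<forall>n\<ge>N. \<forall>\<omega>\<in>space M. norm (s n \<omega> - z \<omega>) < \<epsilon>)"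
    by (simp only: bochner_meas_def)
  then obtain s :: "nat \<Rightarrow> _" where s0: "\<forall>n. countable (s n ` space M) \<and> (\<forall>v. s n -` {v} \<inter> space M \<in> sets M)"
    and c: "\<forall>\<epsilon>>0. \<exists>N. \<forall>n\<ge>N. \<forall>\<omega>\<in>space M. norm (s n \<omega> - z \<omega>) < \<epsilon>"
    by blast
  have s: "\<forall>n. cvm M (s n)" using s0 unfolding cvm_def by simp
  show "\<forall>\<epsilon>>0. \<exists>s. cvm M s \<and> (\<forall>\<omega>\<in>space M. norm (s \<omega> - z \<omega>) < \<epsilon>)"
  proof (intro allI impI)
    fix \<epsilon> :: real assume "\<epsilon> > 0"
    then obtain N where "\<forall>n\<ge>N. \<forall>\<omega>\<in>space M. norm (s n \<omega> - z \<omega>) < \<epsilon>" using c by blast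
    then have "\<forall>\<omega>\<in>space M. norm (s N \<omega> - z \<omega>) < \<epsilon>" by simp
    then show "\<exists>s. cvm M s \<and> (\<forall>\<omega>\<in>space M. norm (s \<omega> - z \<omega>) < \<epsilon>)" using s by blast
  qed
next
  assume H: "\<forall>\<epsilon>>0. \<exists>s. cvm M s \<and> (\<forall>\<omega>\<in>space M. norm (s \<omega> - z \<omega>) < \<epsilon>)"
  have "\<forall>n. \<exists>s. cvm M s \<and> (\<forall>\<omega>\<in>space M. norm (s \<omega> - z \<omega>) < inverse (real (Suc n)))"
    using H by simp
  then obtain s where s0: "\<forall>n. cvm M (s n) \<and> (\<forall>\<omega>\<in>space M. norm (s n \<omega> - z \<omega>) < inverse (real (Suc n)))"
    by (rule choice[THEN exE]) blast
  have s: "\<And>n. cvm M (s n)" using s0 by blast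
  have c: "\<And>n. \<forall>\<omega>\<in>space M. norm (s n \<omega> - z \<omega>) < inverse (real (Suc n))" using s0 by blast
  show "bochner_meas M z"
    unfolding bochner_meas_def
  proof (rule exI[of _ s], rule conjI)
    show "\<forall>n. countable (s n ` space M) \<and> (\<forall>v. s n -` {v} \<inter> space M \<in> sets M)"
      using s unfolding cvm_def by blast
    show "\<forall>\<epsilon>>0. \<exists>N. \<forall>n\<ge>N. \<forall>\<omega>\<in>space M. norm (s n \<omega> - z \<omega>) < \<epsilon>"
    proof (intro allI impI)
    fix \<epsilon> :: real assume "\<epsilon> > 0"
    then obtain N where N: "inverse (real (Suc N)) < \<epsilon>" using reals_Archimedean by blast
    show "\<exists>N. \<forall>n\<ge>N. \<forall>\<omega>\<in>space M. norm (s n \<omega> - z \<omega>) < \<epsilon>"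
    proof (intro exI allI impI ballI)
      fix n \<omega> assume "N \<le> n" "\<omega> \<in> space M"
      have "inverse (real (Suc n)) \<le> inverse (real (Suc N))"
        using \<open>N \<le> n\<close> by (simp add: le_imp_inverse_le)
      moreover have "norm (s n \<omega> - z \<omega>) < inverse (real (Suc n))" using c[of n] \<open>\<omega> \<in> space M\<close> by blast
      ultimately show "norm (s n \<omega> - z \<omega>) < \<epsilon>" using N by linarith
    qed
    qed
  qed
qed

lemma bm_comp2:
  fixes g :: "'w \<Rightarrow> 'a::real_normed_vector" and h :: "'w \<Rightarrow> 'b::real_normed_vector"
    and F :: "'a \<Rightarrow> 'b \<Rightarrow> 'c::real_normed_vector"
  assumes "bochner_meas M g" "bochner_meas M h"
    and uc: "\<forall>\<epsilon>>0. \<exists>\<delta>>0. \<forall>\<omega>\<in>space M. \<forall>a b. norm (a - g \<omega>) < \<delta> \<longrightarrow> norm (b - h \<omega>) < \<delta>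
              \<longrightarrow> norm (F a b - F (g \<omega>) (h \<omega>)) < \<epsilon>"
    and k: "\<forall>\<omega>\<in>space M. k \<omega> = F (g \<omega>) (h \<omega>)"
  shows "bochner_meas M k"
  unfolding bm_char
proof (intro allI impI)
  fix \<epsilon> :: real assume "\<epsilon> > 0"
  then obtain \<delta> where d: "\<delta> > 0" and dd: "\<forall>\<omega>\<in>space M. \<forall>a b. norm (a - g \<omega>) < \<delta> \<longrightarrow> norm (b - h \<omega>) < \<delta>
              \<longrightarrow> norm (F a b - F (g \<omega>) (h \<omega>)) < \<epsilon>" using uc by blast
  obtain s where s: "cvm M s" "\<forall>\<omega>\<in>space M. norm (s \<omega> - g \<omega>) < \<delta>"
    using assms(1) d unfolding bm_char by blast
  obtain t where t: "cvm M t" "\<forall>\<omega>\<in>space M. norm (t \<omega> - h \<omega>) < \<delta>"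
    using assms(2) d unfolding bm_char by blast
  define r where "r = (\<lambda>\<omega>. F (s \<omega>) (t \<omega>))"
  have cs: "countable (s ` space M)" "\<And>v. s -` {v} \<inter> space M \<in> sets M" using s(1) unfolding cvm_def by auto
  have ct: "countable (t ` space M)" "\<And>v. t -` {v} \<inter> space M \<in> sets M" using t(1) unfolding cvm_def by auto
  have cst: "countable (s ` space M \<times> t ` space M)"
    using cs(1) ct(1) by (simp add: countable_SIGMA)
  have "cvm M r"
    unfolding cvm_def
  proof
    have "r ` space M \<subseteq> (\<lambda>p. F (fst p) (snd p)) ` (s ` space M \<times> t ` space M)"
      unfolding r_def by force
    then show "countable (r ` space M)"
      by (rule countable_subset) (use cst in simp)
    show "\<forall>v. r -` {v} \<inter> space M \<in> sets M"
    proof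
      fix v
      let ?I = "{p \<in> s ` space M \<times> t ` space M. F (fst p) (snd p) = v}"
      have eq: "r -` {v} \<inter> space M =
        (\<Union>p\<in>?I. (s -` {fst p} \<inter> space M) \<inter> (t -` {snd p} \<inter> space M))"
      proof (rule set_eqI)
        fix x show "x \<in> r -` {v} \<inter> space M \<longleftrightarrow>
          x \<in> (\<Union>p\<in>?I. (s -` {fst p} \<inter> space M) \<inter> (t -` {snd p} \<inter> space M))"
          unfolding r_def by (auto intro!: bexI[of _ "(s x, t x)"])
      qed
      have "countable ?I"
        by (rule countable_subset[OF _ cst]) blast
      then show "r -` {v} \<inter> space M \<in> sets M"
        unfolding eq by (rule sets.countable_UN'') (use cs(2) ct(2) in blast)
    qed
  qed
  moreover have "\<forall>\<omega>\<in>space M. norm (r \<omega> - k \<omega>) < \<epsilon>"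
  proof
    fix \<omega> assume w: "\<omega> \<in> space M"
    then show "norm (r \<omega> - k \<omega>) < \<epsilon>"
      using dd[rule_format, OF w, of "s \<omega>" "t \<omega>"] s(2) t(2) k w unfolding r_def by simp
  qed
  ultimately show "\<exists>s. cvm M s \<and> (\<forall>\<omega>\<in>space M. norm (s \<omega> - k \<omega>) < \<epsilon>)" by blast
qed

lemma bm_uniform_limit:
  assumes "\<And>n. bochner_meas M (u n)"
    and "\<forall>\<epsilon>>0. \<exists>n. \<forall>\<omega>\<in>space M. norm (u n \<omega> - z \<omega>) < \<epsilon>"
  shows "bochner_meas M z"
  unfolding bm_char
proof (intro allI impI)
  fix \<epsilon> :: real assume "\<epsilon> > 0"
  then obtain n where n: "\<forall>\<omega>\<in>space M. norm (u n \<omega> - z \<omega>) < \<epsilon>/2" using assms(2)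
    by (meson half_gt_zero)
  obtain s where s: "cvm M s" "\<forall>\<omega>\<in>space M. norm (s \<omega> - u n \<omega>) < \<epsilon>/2"
    using assms(1)[of n] \<open>\<epsilon> > 0\<close> unfolding bm_char by (meson half_gt_zero)
  have "\<forall>\<omega>\<in>space M. norm (s \<omega> - z \<omega>) < \<epsilon>"
  proof
    fix \<omega> assume w: "\<omega> \<in> space M"
    have "norm (s \<omega> - z \<omega>) \<le> norm (s \<omega> - u n \<omega>) + norm (u n \<omega> - z \<omega>)"
      using norm_triangle_ineq[of "s \<omega> - u n \<omega>" "u n \<omega> - z \<omega>"] by simp
    then show "norm (s \<omega> - z \<omega>) < \<epsilon>" using n s(2) w by fastforce
  qed
  then show "\<exists>s. cvm M s \<and> (\<forall>\<omega>\<in>space M. norm (s \<omega> - z \<omega>) < \<epsilon>)" using s(1) by blast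
qed

lemma bm_add:
  fixes g h :: "'w \<Rightarrow> 'a::real_normed_vector"
  assumes "bochner_meas M g" "bochner_meas M h" "\<forall>\<omega>\<in>space M. k \<omega> = g \<omega> + h \<omega>"
  shows "bochner_meas M k"
proof (rule bm_comp2[OF assms(1,2), where F="(+)"])
  show "\<forall>\<epsilon>>0. \<exists>\<delta>>0. \<forall>\<omega>\<in>space M. \<forall>a b. norm (a - g \<omega>) < \<delta> \<longrightarrow> norm (b - h \<omega>) < \<delta>
              \<longrightarrow> norm (a + b - (g \<omega> + h \<omega>)) < \<epsilon>"
  proof (intro allI impI exI conjI ballI)
    fix \<epsilon> :: real and \<omega> a b assume "\<epsilon> > 0" "norm (a - g \<omega>) < \<epsilon>/2" "norm (b - h \<omega>) < \<epsilon>/2"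
    moreover have "norm (a + b - (g \<omega> + h \<omega>)) \<le> norm (a - g \<omega>) + norm (b - h \<omega>)"
      using norm_triangle_ineq[of "a - g \<omega>" "b - h \<omega>"] by (simp add: algebra_simps)
    ultimately show "norm (a + b - (g \<omega> + h \<omega>)) < \<epsilon>" by linarith
  qed simp
qed (use assms in auto)

lemma bm_diff:
  fixes g h :: "'w \<Rightarrow> 'a::real_normed_vector"
  assumes "bochner_meas M g" "bochner_meas M h" "\<forall>\<omega>\<in>space M. k \<omega> = g \<omega> - h \<omega>"
  shows "bochner_meas M k"
proof (rule bm_comp2[OF assms(1,2), where F="(-)"])
  show "\<forall>\<epsilon>>0. \<exists>\<delta>>0. \<forall>\<omega>\<in>space M. \<forall>a b. norm (a - g \<omega>) < \<delta> \<longrightarrow> norm (b - h \<omega>) < \<delta>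
              \<longrightarrow> norm (a - b - (g \<omega> - h \<omega>)) < \<epsilon>"
  proof (intro allI impI exI conjI ballI)
    fix \<epsilon> :: real and \<omega> a b assume "\<epsilon> > 0" "norm (a - g \<omega>) < \<epsilon>/2" "norm (b - h \<omega>) < \<epsilon>/2"
    moreover have "norm (a - b - (g \<omega> - h \<omega>)) \<le> norm (a - g \<omega>) + norm (b - h \<omega>)"
      using norm_triangle_ineq4[of "a - g \<omega>" "b - h \<omega>"] by (simp add: algebra_simps)
    ultimately show "norm (a - b - (g \<omega> - h \<omega>)) < \<epsilon>" by linarith
  qed simp
qed (use assms in auto)

lemma bm_linear:
  assumes "bochner_meas M g" "bounded_linear F" "\<forall>\<omega>\<in>space M. k \<omega> = F (g \<omega>)"
  shows "bochner_meas M k"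
proof (rule bm_comp2[OF assms(1,1), where F="\<lambda>a b. F a"])
  interpret F: bounded_linear F by fact
  obtain B where B: "B > 0" "\<And>x. norm (F x) \<le> norm x * B" using F.pos_bounded by blast
  show "\<forall>\<epsilon>>0. \<exists>\<delta>>0. \<forall>\<omega>\<in>space M. \<forall>a b. norm (a - g \<omega>) < \<delta> \<longrightarrow> norm (b - g \<omega>) < \<delta>
              \<longrightarrow> norm (F a - F (g \<omega>)) < \<epsilon>"
  proof (intro allI impI exI conjI ballI)
    fix \<epsilon> :: real and \<omega> a b assume "\<epsilon> > 0" "norm (a - g \<omega>) < \<epsilon>/B"
    then have "norm (a - g \<omega>) * B < \<epsilon>" using B by (simp add: pos_less_divide_eq)
    then show "norm (F a - F (g \<omega>)) < \<epsilon>" using B(2)[of "a - g \<omega>"] by (simp add: F.diff)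
  next
    fix \<epsilon> :: real assume "\<epsilon> > 0" then show "\<epsilon> / B > 0" using B by simp
  qed
qed (use assms in auto)

lemma bm_scaleR:
  fixes g :: "'w \<Rightarrow> real" and h :: "'w \<Rightarrow> 'a::real_normed_vector"
  assumes "bochner_meas M g" "bochner_meas M h"
    and "\<forall>\<omega>\<in>space M. \<bar>g \<omega>\<bar> \<le> B1" "\<forall>\<omega>\<in>space M. norm (h \<omega>) \<le> B2"
    and "\<forall>\<omega>\<in>space M. k \<omega> = g \<omega> *\<^sub>R h \<omega>"
  shows "bochner_meas M k"
proof (rule bm_comp2[OF assms(1,2), where F="\<lambda>a b. a *\<^sub>R b"])
  show "\<forall>\<epsilon>>0. \<exists>\<delta>>0. \<forall>\<omega>\<in>space M. \<forall>a b. norm (a - g \<omega>) < \<delta> \<longrightarrow> norm (b - h \<omega>) < \<delta>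
              \<longrightarrow> norm (a *\<^sub>R b - g \<omega> *\<^sub>R h \<omega>) < \<epsilon>"
  proof (intro allI impI)
    fix \<epsilon> :: real assume e: "\<epsilon> > 0"
    define D where "D = \<bar>B1\<bar> + \<bar>B2\<bar> + 1"
    have D: "D > 0" unfolding D_def by simp
    define \<delta> where "\<delta> = min 1 (\<epsilon> / (2*D))"
    have d: "\<delta> > 0" "\<delta> \<le> 1" "\<delta> * D \<le> \<epsilon>/2" using e D unfolding \<delta>_def
      by (auto simp: min_def pos_le_divide_eq mult.commute)
    show "\<exists>\<delta>>0. \<forall>\<omega>\<in>space M. \<forall>a b. norm (a - g \<omega>) < \<delta> \<longrightarrow> norm (b - h \<omega>) < \<delta>
              \<longrightarrow> norm (a *\<^sub>R b - g \<omega> *\<^sub>R h \<omega>) < \<epsilon>"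
    proof (intro exI conjI ballI allI impI)
      fix \<omega> a b assume w: "\<omega> \<in> space M" and ab: "norm (a - g \<omega>) < \<delta>" "norm (b - h \<omega>) < \<delta>"
      have eq: "a *\<^sub>R b - g \<omega> *\<^sub>R h \<omega> = (a - g \<omega>) *\<^sub>R b + g \<omega> *\<^sub>R (b - h \<omega>)"
        by (simp add: algebra_simps)
      have nb: "norm b \<le> \<bar>B2\<bar> + 1"
        using ab(2) d(2) assms(4) w norm_triangle_ineq[of "b - h \<omega>" "h \<omega>"] by auto
      have "norm (a *\<^sub>R b - g \<omega> *\<^sub>R h \<omega>) \<le> \<bar>a - g \<omega>\<bar> * norm b + \<bar>g \<omega>\<bar> * norm (b - h \<omega>)"
        unfolding eq by (metis norm_scaleR norm_triangle_ineq)
      also have "\<dots> \<le> \<delta> * (\<bar>B2\<bar> + 1) + \<bar>B1\<bar> * \<delta>"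
      proof (intro add_mono mult_mono)
        show "\<bar>a - g \<omega>\<bar> \<le> \<delta>" using ab(1) by simp
        show "\<bar>g \<omega>\<bar> \<le> \<bar>B1\<bar>" using assms(3) w by fastforce
        show "norm (b - h \<omega>) \<le> \<delta>" using ab(2) by simp
      qed (use nb d in auto)
      also have "\<dots> = \<delta> * D" unfolding D_def by (simp add: algebra_simps)
      also have "\<dots> \<le> \<epsilon>/2" by fact
      also have "\<dots> < \<epsilon>" using e by simp
      finally show "norm (a *\<^sub>R b - g \<omega> *\<^sub>R h \<omega>) < \<epsilon>" .
    qed (use d in auto)
  qed
qed (use assms in auto)

lemma bm_const: "bochner_meas M (\<lambda>\<omega>. c)"
  unfolding bm_char
proof (intro allI impI exI conjI)
  show "cvm M (\<lambda>\<omega>. c)" unfolding cvm_def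
  proof
    show "countable ((\<lambda>\<omega>. c) ` space M)"
      by (rule countable_subset[of _ "{c}"]) auto
    show "\<forall>v. (\<lambda>\<omega>. c) -` {v} \<inter> space M \<in> sets M"
    proof
      fix v show "(\<lambda>\<omega>. c) -` {v} \<inter> space M \<in> sets M"
        by (cases "v = c") auto
    qed
  qed
qed auto

lemma bm_cong: "bochner_meas M g \<Longrightarrow> \<forall>\<omega>\<in>space M. k \<omega> = g \<omega> \<Longrightarrow> bochner_meas M k"
  unfolding bm_char by simp

lemma bm_sum:
  fixes u :: "nat \<Rightarrow> 'w \<Rightarrow> 'a::real_normed_vector"
  assumes "\<And>n. bochner_meas M (u n)"
  shows "bochner_meas M (\<lambda>\<omega>. \<Sum>n<N. u n \<omega>)"
proof (induction N)
  case 0 then show ?case using bm_const[of M 0] by simp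
next
  case (Suc N)
  show ?case
    by (rule bm_add[OF Suc assms[of N]]) simp
qed

lemma bm_inverse:
  fixes g :: "'w \<Rightarrow> real"
  assumes "bochner_meas M g" "c > 0" "\<forall>\<omega>\<in>space M. c \<le> g \<omega>"
    and "\<forall>\<omega>\<in>space M. k \<omega> = 1 / g \<omega>"
  shows "bochner_meas M k"
proof (rule bm_comp2[OF assms(1,1), where F="\<lambda>a b. 1 / max a c"])
  show "\<forall>\<epsilon>>0. \<exists>\<delta>>0. \<forall>\<omega>\<in>space M. \<forall>a b. norm (a - g \<omega>) < \<delta> \<longrightarrow> norm (b - g \<omega>) < \<delta>
              \<longrightarrow> norm (1 / max a c - 1 / max (g \<omega>) c) < \<epsilon>"
  proof (intro allI impI)
    fix \<epsilon> :: real assume e: "\<epsilon> > 0"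
    show "\<exists>\<delta>>0. \<forall>\<omega>\<in>space M. \<forall>a b. norm (a - g \<omega>) < \<delta> \<longrightarrow> norm (b - g \<omega>) < \<delta>
              \<longrightarrow> norm (1 / max a c - 1 / max (g \<omega>) c) < \<epsilon>"
    proof (intro exI conjI ballI allI impI)
      show "\<epsilon> * c * c > 0" using e assms(2) by simp
      fix \<omega> a b assume w: "\<omega> \<in> space M" and ab: "norm (a - g \<omega>) < \<epsilon> * c * c"
      have gc: "c \<le> g \<omega>" using assms(3) w by blast
      define m where "m = max a c"
      have m: "c \<le> m" "\<bar>m - g \<omega>\<bar> \<le> \<bar>a - g \<omega>\<bar>" unfolding m_def using gc by auto
      have "1 / m - 1 / g \<omega> = (g \<omega> - m) / (m * g \<omega>)"
        using m gc assms(2) by (simp add: field_simps)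
      then have "\<bar>1 / m - 1 / g \<omega>\<bar> = \<bar>m - g \<omega>\<bar> / (m * g \<omega>)"
        using m gc assms(2) by (simp add: abs_minus_commute)
      also have "\<dots> \<le> \<bar>m - g \<omega>\<bar> / (c * c)"
        using m gc assms(2) by (intro divide_left_mono mult_mono) auto
      also have "\<dots> < \<epsilon>"
        using m(2) ab assms(2) by (simp add: pos_divide_less_eq)
      finally show "norm (1 / max a c - 1 / max (g \<omega>) c) < \<epsilon>"
        using gc unfolding m_def by (simp add: max_def)
    qed
  qed
qed (use assms in \<open>auto simp: max_def\<close>)

locale cs =
  fixes C :: "'e::banach set" and lf :: "'e \<Rightarrow> real" and K \<rho> :: real
  assumes cset: "cone_setting C lf K \<rho>"
begin

lemma closedC: "closed C" and convexC: "convex C" and coneC: "cone C"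
  and pointedC: "C \<inter> uminus ` C = {0}" and lf_bl: "bounded_linear lf" and lf_on: "onorm lf = 1"
  and K1: "1 \<le> K" and lfC: "\<forall>\<phi>\<in>C. lf \<phi> \<ge> norm \<phi> / K"
  and rho0: "0 < \<rho>" and rho1: "\<rho> \<le> 1" and Rne: "rho_interior C \<rho> \<noteq> {0}"
  using cset unfolding cone_setting_def by auto

sublocale lf: bounded_linear lf by (rule lf_bl)

lemma zeroC: "0 \<in> C" using pointedC by auto

lemma pointed: "x \<in> C \<Longrightarrow> - x \<in> C \<Longrightarrow> x = 0"
proof -
  assume "x \<in> C" "- x \<in> C"
  have "x \<in> uminus ` C" using \<open>- x \<in> C\<close> by (rule rev_image_eqI) simp
  with \<open>x \<in> C\<close> show "x = 0" using pointedC by blast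
qed

lemma scaleC: "x \<in> C \<Longrightarrow> 0 \<le> c \<Longrightarrow> c *\<^sub>R x \<in> C"
  using coneC unfolding cone_def by blast

lemma addC: "x \<in> C \<Longrightarrow> y \<in> C \<Longrightarrow> x + y \<in> C"
proof -
  assume "x \<in> C" "y \<in> C"
  then have "(1/2) *\<^sub>R x + (1/2) *\<^sub>R y \<in> C"
    by (rule convexD[OF convexC]) auto
  then have "2 *\<^sub>R ((1/2) *\<^sub>R x + (1/2) *\<^sub>R y) \<in> C" by (rule scaleC) simp
  then show "x + y \<in> C" by (simp add: scaleR_add_right)
qed

lemma lf_abs: "\<bar>lf x\<bar> \<le> norm x"
  using onorm[OF lf_bl, of x] lf_on by simp

lemma lf_C: "x \<in> C \<Longrightarrow> norm x \<le> K * lf x"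
  using lfC K1 by (auto simp: field_simps)

lemma lf_C_pos: "x \<in> C \<Longrightarrow> x \<noteq> 0 \<Longrightarrow> 0 < lf x"
proof -
  assume "x \<in> C" "x \<noteq> 0"
  then have "0 < K * lf x" using lf_C[of x] by (meson less_le_trans zero_less_norm_iff)
  then show "0 < lf x" using K1 by (simp add: zero_less_mult_iff)
qed

lemma K0: "0 < K" using K1 by simp

lemma rho_cball:
  assumes "\<phi> \<in> rho_interior C \<rho>" "\<phi> \<noteq> 0" "norm e \<le> \<rho> * norm \<phi>"
  shows "\<phi> + e \<in> C"
proof -
  have r: "\<rho> * norm \<phi> > 0" using assms(2) rho0 by simp
  have "ball \<phi> (\<rho> * norm \<phi>) \<subseteq> C" using assms(1) unfolding rho_interior_def by blast
  then have "closure (ball \<phi> (\<rho> * norm \<phi>)) \<subseteq> C"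
    using closedC closure_minimal by blast
  then have "cball \<phi> (\<rho> * norm \<phi>) \<subseteq> C" using closure_ball[OF r, of \<phi>] by simp
  moreover have "\<phi> + e \<in> cball \<phi> (\<rho> * norm \<phi>)" using assms(3) by (simp add: dist_norm)
  ultimately show ?thesis by blast
qed

lemma rho_C: "\<phi> \<in> rho_interior C \<rho> \<Longrightarrow> \<phi> \<in> C"
  unfolding rho_interior_def by blast

lemma norm_normalized: "\<phi> \<in> normalized_part C \<rho> lf \<Longrightarrow> 1 \<le> norm \<phi>"
  using lf_abs[of \<phi>] unfolding normalized_part_def by auto

lemma normalized_ne: "\<phi> \<in> normalized_part C \<rho> lf \<Longrightarrow> \<phi> \<noteq> 0"
  unfolding normalized_part_def by auto

end

context cs begin

lemma op_bl: "T \<in> operator_class C \<rho> \<theta> \<Longrightarrow> bounded_linear T"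
  unfolding operator_class_def by blast

lemma op_C: "T \<in> operator_class C \<rho> \<theta> \<Longrightarrow> x \<in> C \<Longrightarrow> T x \<in> C"
proof -
  assume T: "T \<in> operator_class C \<rho> \<theta>" and x: "x \<in> C"
  show "T x \<in> C"
  proof (cases "x = 0")
    case True
    then show ?thesis using linear_0[OF bounded_linear.linear[OF op_bl[OF T]]] zeroC by simp
  next
    case False
    then have "T x \<in> rho_interior C \<rho> - {0}" using T x unfolding operator_class_def by blast
    then show ?thesis using rho_C by blast
  qed
qed

lemma op_R: "T \<in> operator_class C \<rho> \<theta> \<Longrightarrow> x \<in> C \<Longrightarrow> x \<noteq> 0 \<Longrightarrow> T x \<in> rho_interior C \<rho> - {0}"
  unfolding operator_class_def by blast

lemma op_norm: "T \<in> operator_class C \<rho> \<theta> \<Longrightarrow> norm (T x) \<le> \<theta> * norm x"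
proof -
  assume T: "T \<in> operator_class C \<rho> \<theta>"
  have "norm (T x) \<le> onorm T * norm x" using onorm[OF op_bl[OF T]] .
  also have "\<dots> \<le> \<theta> * norm x" using T unfolding operator_class_def by (auto intro: mult_right_mono)
  finally show ?thesis .
qed

lemma key_lower:
  assumes T: "T \<in> operator_class C \<rho> \<theta>" and phi: "\<phi> \<in> rho_interior C \<rho>" "\<phi> \<noteq> 0"
  shows "\<rho> * norm \<phi> * onorm T \<le> K * lf (T \<phi>)"
proof -
  interpret T: bounded_linear T by (rule op_bl[OF T])
  have rp: "\<rho> * norm \<phi> > 0" using rho0 phi by simp
  have b0: "0 \<le> K * lf (T \<phi>) / (\<rho> * norm \<phi>)"
    using lf_C[OF op_C[OF T rho_C[OF phi(1)]]] rp by (smt (verit) divide_nonneg_pos norm_ge_zero)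
  have "onorm T \<le> K * lf (T \<phi>) / (\<rho> * norm \<phi>)"
  proof (rule onorm_bound[OF b0])
    fix x
    show "norm (T x) \<le> K * lf (T \<phi>) / (\<rho> * norm \<phi>) * norm x"
    proof (cases "x = 0")
      case True then show ?thesis by simp
    next
      case False
      define c where "c = \<rho> * norm \<phi> / norm x"
      have c: "c > 0" using rp False unfolding c_def by simp
      define e where "e = c *\<^sub>R x"
      have ne: "norm e = \<rho> * norm \<phi>" using False c rp unfolding e_def c_def by simp
      have A: "T (\<phi> + e) \<in> C" using op_C[OF T rho_cball[OF phi, of e]] ne by simp
      have B: "T (\<phi> + - e) \<in> C" using op_C[OF T rho_cball[OF phi, of "- e"]] ne by simp
      have "2 *\<^sub>R T e = T (\<phi> + e) - T (\<phi> + - e)"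
        by (simp add: T.add T.neg T.diff scaleR_2)
      then have "2 * norm (T e) \<le> norm (T (\<phi> + e)) + norm (T (\<phi> + - e))"
        using norm_triangle_ineq4[of "T (\<phi> + e)" "T (\<phi> + - e)"] by (metis norm_scaleR abs_numeral)
      also have "\<dots> \<le> K * lf (T (\<phi> + e)) + K * lf (T (\<phi> + - e))"
        using lf_C[OF A] lf_C[OF B] by simp
      also have "\<dots> = 2 * (K * lf (T \<phi>))" by (simp add: T.add T.neg T.diff lf.add lf.neg lf.diff algebra_simps)
      finally have "norm (T e) \<le> K * lf (T \<phi>)" by simp
      moreover have "norm (T e) = c * norm (T x)" unfolding e_def using c by (simp add: T.scaleR)
      ultimately have "c * norm (T x) \<le> K * lf (T \<phi>)" by simp
      then have "norm (T x) \<le> K * lf (T \<phi>) / c" using c by (simp add: field_simps)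
      also have "\<dots> = K * lf (T \<phi>) / (\<rho> * norm \<phi>) * norm x" unfolding c_def using False by simp
      finally show ?thesis .
    qed
  qed
  then show ?thesis using rp by (simp add: field_simps)
qed

lemma lambda_lower:
  assumes T: "T \<in> operator_class C \<rho> \<theta>" and phi: "\<phi> \<in> normalized_part C \<rho> lf" and th1: "1 \<le> \<theta>"
  shows "\<rho> / (K * \<theta>) \<le> lf (T \<phi>)"
proof -
  have ph: "\<phi> \<in> rho_interior C \<rho>" "\<phi> \<noteq> 0" using phi normalized_ne unfolding normalized_part_def by auto
  have on: "1 / \<theta> \<le> onorm T" using T unfolding operator_class_def by blast
  have th: "\<theta> > 0" using th1 by simp
  have "\<rho> * 1 * (1 / \<theta>) \<le> \<rho> * norm \<phi> * onorm T"
    using norm_normalized[OF phi] on rho0 th by (intro mult_mono) auto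
  also have "\<dots> \<le> K * lf (T \<phi>)" by (rule key_lower[OF T ph])
  finally have "\<rho> / \<theta> \<le> K * lf (T \<phi>)" by simp
  then show ?thesis using K0 th by (simp add: field_simps)
qed

end

context cs begin

lemma hd:
  assumes p: "p \<in> rho_interior C \<rho>" "p \<noteq> 0" and q: "q \<in> C" "q \<noteq> 0"
  shows "\<exists>\<beta>. hdelta C p q = ereal \<beta> \<and> 0 < \<beta> \<and> \<beta> *\<^sub>R p - q \<in> C \<and> \<beta> \<le> norm q / (\<rho> * norm p)"
proof -
  define S where "S = {t. t > 0 \<and> t *\<^sub>R p - q \<in> C}"
  define r0 where "r0 = norm q / (\<rho> * norm p)"
  have rp: "\<rho> * norm p > 0" using rho0 p by simp
  have r0: "r0 > 0" using rp q unfolding r0_def by simp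
  have up: "t \<in> S" if t: "t > r0" for t
  proof -
    have tp: "t > 0" using t r0 by simp
    have "norm q / t < \<rho> * norm p"
      using t rp tp unfolding r0_def by (simp add: field_simps)
    then have "p + (- (1/t) *\<^sub>R q) \<in> C"
      using tp by (intro rho_cball[OF p]) simp
    then have "t *\<^sub>R (p + (- (1/t) *\<^sub>R q)) \<in> C" using tp by (intro scaleC) auto
    then have "t *\<^sub>R p - q \<in> C" using tp by (simp add: scaleR_diff_right)
    then show ?thesis unfolding S_def using tp by simp
  qed
  have lfp: "lf p > 0" using lf_C_pos[OF rho_C[OF p(1)] p(2)] .
  have lfq: "lf q > 0" using lf_C_pos[OF q] .
  have low: "lf q / lf p \<le> t" if "t \<in> S" for t
  proof -
    have "t *\<^sub>R p - q \<in> C" using that unfolding S_def by blast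
    then have "0 \<le> lf (t *\<^sub>R p - q)" using lf_C[of "t *\<^sub>R p - q"] K0
      by (meson norm_ge_zero order_trans zero_le_mult_iff not_le less_le)
    then have "lf q \<le> t * lf p" by (simp add: lf.diff lf.scaleR)
    then show ?thesis using lfp by (simp add: divide_le_eq)
  qed
  have Sne: "S \<noteq> {}" using up[of "r0 + 1"] by auto
  have Sbdd: "bdd_below S" by (rule bdd_belowI[of _ "lf q / lf p"]) (rule low)
  define \<beta> where "\<beta> = Inf S"
  have eq: "hdelta C p q = ereal \<beta>"
  proof -
    have "{ereal t | t. t > 0 \<and> t *\<^sub>R p - q \<in> C} = ereal ` S" unfolding S_def by auto
    then show ?thesis unfolding hdelta_def \<beta>_def using ereal_Inf'[OF Sbdd Sne] by simp
  qed
  have b0: "\<beta> > 0"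
  proof -
    have "lf q / lf p \<le> \<beta>" unfolding \<beta>_def using Sne low by (intro cInf_greatest) auto
    moreover have "lf q / lf p > 0" using lfp lfq by simp
    ultimately show ?thesis by linarith
  qed
  have bl: "\<beta> \<le> r0"
  proof (rule field_le_epsilon)
    fix e :: real assume "e > 0"
    then have "r0 + e \<in> S" using up by simp
    then show "\<beta> \<le> r0 + e" unfolding \<beta>_def using Sbdd by (rule cInf_lower)
  qed
  have above: "(\<beta> + e) *\<^sub>R p - q \<in> C" if e: "e > 0" for e
  proof -
    have "Inf S < \<beta> + e" using e unfolding \<beta>_def by simp
    then obtain t where t: "t \<in> S" "t < \<beta> + e" using cInf_less_iff[OF Sne Sbdd] by blast
    have "(t *\<^sub>R p - q) + (\<beta> + e - t) *\<^sub>R p \<in> C"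
      using t rho_C[OF p(1)] unfolding S_def by (intro addC scaleC) auto
    then show ?thesis by (simp add: algebra_simps)
  qed
  have lim: "(\<lambda>n. (\<beta> + inverse (real (Suc n))) *\<^sub>R p - q) \<longlonglongrightarrow> \<beta> *\<^sub>R p - q"
    by (intro tendsto_intros LIMSEQ_inverse_real_of_nat_add)
  have "\<beta> *\<^sub>R p - q \<in> C"
    by (rule closed_sequentially[OF closedC _ lim]) (intro above, simp)
  then show ?thesis using eq b0 bl unfolding r0_def by blast
qed

lemma prod_ge1:
  assumes "\<beta> *\<^sub>R p - q \<in> C" "\<gamma> *\<^sub>R q - p \<in> C" "0 < \<beta>" "q \<in> C" "q \<noteq> 0"
  shows "1 \<le> \<beta> * \<gamma>"
proof (rule ccontr)
  assume "\<not> 1 \<le> \<beta> * \<gamma>"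
  then have l: "1 - \<beta> * \<gamma> > 0" by simp
  have "\<beta> *\<^sub>R (\<gamma> *\<^sub>R q - p) + (\<beta> *\<^sub>R p - q) \<in> C"
    using assms by (intro addC scaleC) auto
  then have bq: "(\<beta> * \<gamma> - 1) *\<^sub>R q \<in> C" by (simp add: algebra_simps)
  have "(1 / (1 - \<beta> * \<gamma>)) *\<^sub>R ((\<beta> * \<gamma> - 1) *\<^sub>R q) \<in> C"
    by (rule scaleC[OF bq]) (use l in simp)
  moreover have "(1 / (1 - \<beta> * \<gamma>)) * (\<beta> * \<gamma> - 1) = -1" using l by (simp add: field_simps)
  ultimately have "- q \<in> C" by simp
  then show False using pointed assms(4,5) by blast
qed

end

context cs begin

lemma hdist:
  assumes p: "p \<in> rho_interior C \<rho> - {0}" and q: "q \<in> rho_interior C \<rho> - {0}"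
  shows "\<exists>\<beta> \<gamma>. hilbert_dist C p q = ereal (ln (\<beta> * \<gamma>)) \<and> 0 < \<beta> \<and> 0 < \<gamma> \<and>
     \<beta> *\<^sub>R p - q \<in> C \<and> \<gamma> *\<^sub>R q - p \<in> C \<and> \<beta> * \<gamma> \<le> 1 / \<rho>\<^sup>2 \<and> 1 \<le> \<beta> * \<gamma>"
proof -
  obtain \<beta> where b: "hdelta C p q = ereal \<beta>" "0 < \<beta>" "\<beta> *\<^sub>R p - q \<in> C" "\<beta> \<le> norm q / (\<rho> * norm p)"
    using hd[of p q] p q rho_C by blast
  obtain \<gamma> where g: "hdelta C q p = ereal \<gamma>" "0 < \<gamma>" "\<gamma> *\<^sub>R q - p \<in> C" "\<gamma> \<le> norm p / (\<rho> * norm q)"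
    using hd[of q p] p q rho_C by blast
  have "hilbert_dist C p q = ereal (ln (\<beta> * \<gamma>))"
    unfolding hilbert_dist_def using b(1) g(1) by simp
  moreover have "\<beta> * \<gamma> \<le> (norm q / (\<rho> * norm p)) * (norm p / (\<rho> * norm q))"
    using b g by (intro mult_mono) auto
  moreover have "(norm q / (\<rho> * norm p)) * (norm p / (\<rho> * norm q)) = 1 / \<rho>\<^sup>2"
    using p q rho0 by (simp add: field_simps power2_eq_square)
  moreover have "1 \<le> \<beta> * \<gamma>"
    using prod_ge1[OF b(3) g(3) b(2)] q rho_C by blast
  ultimately show ?thesis using b g by metis
qed

lemma diam:
  "\<exists>\<Delta>. hilbert_diam C \<rho> = ereal \<Delta> \<and> 0 \<le> \<Delta>"
proof -
  let ?R = "rho_interior C \<rho> - {0}"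
  have z: "0 \<in> rho_interior C \<rho>" unfolding rho_interior_def using zeroC by simp
  obtain p0 where p0: "p0 \<in> ?R" using Rne z by blast
  have ub: "hilbert_dist C (fst x) (snd x) \<le> ereal (ln (1 / \<rho>\<^sup>2))" if "x \<in> ?R \<times> ?R" for x
  proof -
    have "fst x \<in> ?R" "snd x \<in> ?R" using that by (auto simp: mem_Times_iff)
    then obtain \<beta> \<gamma> where bg: "hilbert_dist C (fst x) (snd x) = ereal (ln (\<beta> * \<gamma>))"
      "\<beta> * \<gamma> \<le> 1 / \<rho>\<^sup>2" "1 \<le> \<beta> * \<gamma>"
      using hdist by blast
    have "ln (\<beta> * \<gamma>) \<le> ln (1 / \<rho>\<^sup>2)" using bg(2,3) by (subst ln_le_cancel_iff) auto
    then show ?thesis using bg(1) by simp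
  qed
  have lb: "ereal 0 \<le> hilbert_dist C p0 p0"
  proof -
    obtain \<beta> \<gamma> where bg: "hilbert_dist C p0 p0 = ereal (ln (\<beta> * \<gamma>))" "1 \<le> \<beta> * \<gamma>"
      using hdist[of p0 p0] p0 by blast
    then show ?thesis by simp
  qed
  have "hilbert_dist C p0 p0 \<le> hilbert_diam C \<rho>"
    unfolding hilbert_diam_def using p0 by (intro SUP_upper2[of "(p0, p0)"]) auto
  then have l: "ereal 0 \<le> hilbert_diam C \<rho>" using lb by simp
  have u: "hilbert_diam C \<rho> \<le> ereal (ln (1 / \<rho>\<^sup>2))"
    unfolding hilbert_diam_def by (rule SUP_least) (rule ub)
  show ?thesis
  proof (cases "hilbert_diam C \<rho>")
    case (real r) then show ?thesis using l by auto
  next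
    case PInf then show ?thesis using u by simp
  next
    case MInf then show ?thesis using l by simp
  qed
qed

definition Dl :: real where "Dl = real_of_ereal (hilbert_diam C \<rho>)"

lemma Dl: "hilbert_diam C \<rho> = ereal Dl" "0 \<le> Dl"
  using diam unfolding Dl_def by auto

lemma eta_eq: "eta_const C \<rho> = tanh (Dl / 4)"
  unfolding eta_const_def using Dl by simp

lemma eta_ge0: "0 \<le> eta_const C \<rho>"
  unfolding eta_eq using tanh_real_le_iff[of 0 "Dl / 4"] Dl by simp

lemma eta_lt1: "eta_const C \<rho> < 1"
  unfolding eta_eq by (rule tanh_real_lt_1)

lemma tanh_bound:
  fixes \<beta> \<gamma> :: real
  assumes "0 < \<beta>" "0 < \<gamma>" "1 \<le> \<beta> * \<gamma>"
  shows "(\<beta> * \<gamma> - 1) / ((1 + \<beta>) * (1 + \<gamma>)) \<le> tanh (ln (\<beta> * \<gamma>) / 4)"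
proof -
  define y where "y = sqrt (\<beta> * \<gamma>)"
  have y0: "y > 0" unfolding y_def using assms by simp
  have y1: "1 \<le> y" unfolding y_def using assms(3) by simp
  have yy: "y * y = \<beta> * \<gamma>" unfolding y_def using assms by simp
  have "ln (\<beta> * \<gamma>) / 4 = ln (sqrt y)"
    using y0 assms unfolding y_def by (simp add: ln_sqrt)
  then have th: "tanh (ln (\<beta> * \<gamma>) / 4) = (y - 1) / (y + 1)"
    using tanh_ln_real[of "sqrt y"] y0 by simp
  have sb: "sqrt \<beta> * sqrt \<gamma> = y" unfolding y_def by (simp add: real_sqrt_mult)
  have "0 \<le> (sqrt \<beta> - sqrt \<gamma>)\<^sup>2" by simp
  then have "2 * y \<le> \<beta> + \<gamma>"
    using assms(1,2) sb by (simp add: power2_eq_square algebra_simps)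
  then have den: "(1 + y) * (1 + y) \<le> (1 + \<beta>) * (1 + \<gamma>)"
    using yy by (simp add: algebra_simps)
  have "(\<beta> * \<gamma> - 1) / ((1 + \<beta>) * (1 + \<gamma>)) \<le> (\<beta> * \<gamma> - 1) / ((1 + y) * (1 + y))"
    using den y0 assms by (intro divide_left_mono) auto
  also have "\<dots> = ((y - 1) * (y + 1)) / ((y + 1) * (y + 1))"
    unfolding yy[symmetric] by (simp add: algebra_simps)
  also have "\<dots> = (y - 1) / (y + 1)"
    using y0 by simp
  finally show ?thesis using th by simp
qed

lemma osc:
  assumes p: "p \<in> rho_interior C \<rho> - {0}" and q: "q \<in> rho_interior C \<rho> - {0}"
  shows "\<exists>c1 c2. p - c1 *\<^sub>R (p + q) \<in> C \<and> c2 *\<^sub>R (p + q) - p \<in> C \<and> c2 - c1 \<le> eta_const C \<rho>"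
proof -
  obtain \<beta> \<gamma> where bg: "hilbert_dist C p q = ereal (ln (\<beta> * \<gamma>))" "0 < \<beta>" "0 < \<gamma>"
     "\<beta> *\<^sub>R p - q \<in> C" "\<gamma> *\<^sub>R q - p \<in> C" "1 \<le> \<beta> * \<gamma>"
    using hdist[OF p q] by blast
  have "hilbert_dist C p q \<le> hilbert_diam C \<rho>"
    unfolding hilbert_diam_def using p q by (intro SUP_upper2[of "(p, q)"]) auto
  then have lnD: "ln (\<beta> * \<gamma>) \<le> Dl" using bg(1) Dl by simp
  define c1 where "c1 = 1 / (1 + \<beta>)"
  define c2 where "c2 = \<gamma> / (1 + \<gamma>)"
  have e1: "p - c1 *\<^sub>R (p + q) = (1 / (1 + \<beta>)) *\<^sub>R (\<beta> *\<^sub>R p - q)"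
  proof -
    have "(1 + \<beta>) *\<^sub>R (p - c1 *\<^sub>R (p + q)) = \<beta> *\<^sub>R p - q"
      unfolding c1_def using bg(2) by (simp add: algebra_simps)
    moreover have "p - c1 *\<^sub>R (p + q) = (1 / (1 + \<beta>)) *\<^sub>R ((1 + \<beta>) *\<^sub>R (p - c1 *\<^sub>R (p + q)))"
      using bg(2) by simp
    ultimately show ?thesis by simp
  qed
  have e2: "c2 *\<^sub>R (p + q) - p = (1 / (1 + \<gamma>)) *\<^sub>R (\<gamma> *\<^sub>R q - p)"
  proof -
    have "(1 + \<gamma>) *\<^sub>R (c2 *\<^sub>R (p + q) - p) = \<gamma> *\<^sub>R q - p"
    proof -
      have h: "(1 + \<gamma>) * c2 = \<gamma>" unfolding c2_def using bg(3) by simp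
      show ?thesis unfolding scaleR_diff_right scaleR_scaleR h by (simp add: algebra_simps)
    qed
    moreover have "c2 *\<^sub>R (p + q) - p = (1 / (1 + \<gamma>)) *\<^sub>R ((1 + \<gamma>) *\<^sub>R (c2 *\<^sub>R (p + q) - p))"
      using bg(3) by simp
    ultimately show ?thesis by simp
  qed
  have "c2 - c1 = (\<beta> * \<gamma> - 1) / ((1 + \<beta>) * (1 + \<gamma>))"
    unfolding c1_def c2_def using bg(2,3) by (simp add: field_simps)
  also have "\<dots> \<le> tanh (ln (\<beta> * \<gamma>) / 4)" by (rule tanh_bound) (use bg in auto)
  also have "\<dots> \<le> eta_const C \<rho>" unfolding eta_eq using lnD tanh_real_le_iff by simp
  finally have "c2 - c1 \<le> eta_const C \<rho>" .
  moreover have "p - c1 *\<^sub>R (p + q) \<in> C" unfolding e1 using bg by (intro scaleC) auto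
  moreover have "c2 *\<^sub>R (p + q) - p \<in> C" unfolding e2 using bg by (intro scaleC) auto
  ultimately show ?thesis by blast
qed

end

context cs begin

lemma lf_nonneg: "x \<in> C \<Longrightarrow> 0 \<le> lf x"
  using lf_C[of x] K0 by (meson norm_ge_zero order_trans zero_le_mult_iff not_le less_le)

lemma ba_nonneg:
  assumes "f' \<in> C" "f' \<noteq> 0" "w - a *\<^sub>R f' \<in> C" "b *\<^sub>R f' - w \<in> C"
  shows "a \<le> b"
proof (rule ccontr)
  assume "\<not> a \<le> b"
  then have ab: "a - b > 0" by simp
  have "(w - a *\<^sub>R f') + (b *\<^sub>R f' - w) \<in> C" using assms by (intro addC)
  then have bq: "(b - a) *\<^sub>R f' \<in> C" by (simp add: algebra_simps)
  have "(1 / (a - b)) *\<^sub>R ((b - a) *\<^sub>R f') \<in> C" by (rule scaleC[OF bq]) (use ab in simp)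
  moreover have "(1 / (a - b)) * (b - a) = -1" using ab by (simp add: field_simps)
  ultimately have "- f' \<in> C" by simp
  then show False using pointed assms(1,2) by blast
qed

lemma step:
  assumes T: "T \<in> operator_class C \<rho> \<theta>" and f': "f' \<in> C" "f' \<noteq> 0" and lam: "lam > 0"
    and Tf: "T f' = lam *\<^sub>R f0"
    and w: "w - a *\<^sub>R f' \<in> C" "b *\<^sub>R f' - w \<in> C"
  shows "\<exists>a' b'. (1/lam) *\<^sub>R T w - a' *\<^sub>R f0 \<in> C \<and> b' *\<^sub>R f0 - (1/lam) *\<^sub>R T w \<in> C
           \<and> b' - a' \<le> eta_const C \<rho> * (b - a)"
proof -
  interpret T: bounded_linear T by (rule op_bl[OF T])
  have ab: "a \<le> b" by (rule ba_nonneg[OF f' w])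
  have eb: "0 \<le> eta_const C \<rho> * (b - a)" using eta_ge0 ab by simp
  define u where "u = w - a *\<^sub>R f'"
  define v where "v = b *\<^sub>R f' - w"
  have Tfs: "T (c *\<^sub>R f') = (c * lam) *\<^sub>R f0" for c by (simp add: T.scaleR Tf)
  show ?thesis
  proof (cases "u = 0")
    case True
    then have "w = a *\<^sub>R f'" unfolding u_def by simp
    then have "(1/lam) *\<^sub>R T w = a *\<^sub>R f0" using lam by (simp add: Tfs)
    then show ?thesis using eb zeroC by (intro exI[of _ a]) simp
  next
    case u0: False
    show ?thesis
    proof (cases "v = 0")
      case True
      then have "w = b *\<^sub>R f'" unfolding v_def by simp
      then have "(1/lam) *\<^sub>R T w = b *\<^sub>R f0" using lam by (simp add: Tfs)
      then show ?thesis using eb zeroC by (intro exI[of _ b]) simp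
    next
      case v0: False
      define p where "p = T u"
      define q where "q = T v"
      have p: "p \<in> rho_interior C \<rho> - {0}" unfolding p_def using op_R[OF T] w u0 unfolding u_def by blast
      have q: "q \<in> rho_interior C \<rho> - {0}" unfolding q_def using op_R[OF T] w v0 unfolding v_def by blast
      obtain c1 c2 where c: "p - c1 *\<^sub>R (p + q) \<in> C" "c2 *\<^sub>R (p + q) - p \<in> C" "c2 - c1 \<le> eta_const C \<rho>"
        using osc[OF p q] by blast
      have pq: "p + q = ((b - a) * lam) *\<^sub>R f0"
      proof -
        have "p + q = T (u + v)" unfolding p_def q_def by (simp add: T.add)
        also have "u + v = (b - a) *\<^sub>R f'" unfolding u_def v_def by (simp add: algebra_simps)
        finally show ?thesis by (simp add: Tfs)
      qed
      have Tw: "T w = (a * lam) *\<^sub>R f0 + p"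
      proof -
        have "w = a *\<^sub>R f' + u" unfolding u_def by simp
        then show ?thesis unfolding p_def by (simp add: T.add Tfs)
      qed
      define a' where "a' = a + c1 * (b - a)"
      define b' where "b' = a + c2 * (b - a)"
      have e1: "(1/lam) *\<^sub>R T w - a' *\<^sub>R f0 = (1/lam) *\<^sub>R (p - c1 *\<^sub>R (p + q))"
        unfolding Tw pq a'_def using lam by (simp add: algebra_simps scaleR_add_left)
      have e2: "b' *\<^sub>R f0 - (1/lam) *\<^sub>R T w = (1/lam) *\<^sub>R (c2 *\<^sub>R (p + q) - p)"
        unfolding Tw pq b'_def using lam by (simp add: algebra_simps scaleR_add_left)
      have "b' - a' = (c2 - c1) * (b - a)" unfolding a'_def b'_def by (simp add: algebra_simps)
      also have "\<dots> \<le> eta_const C \<rho> * (b - a)" using c(3) ab by (intro mult_right_mono) auto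
      finally have "b' - a' \<le> eta_const C \<rho> * (b - a)" .
      moreover have "(1/lam) *\<^sub>R T w - a' *\<^sub>R f0 \<in> C" unfolding e1 using c lam by (intro scaleC) auto
      moreover have "b' *\<^sub>R f0 - (1/lam) *\<^sub>R T w \<in> C" unfolding e2 using c lam by (intro scaleC) auto
      ultimately show ?thesis by blast
    qed
  qed
qed

lemma normb:
  assumes "y - a *\<^sub>R f0 \<in> C" "b *\<^sub>R f0 - y \<in> C" "lf y = 0" "lf f0 = 1"
  shows "norm y \<le> K / 2 * (b - a)"
proof -
  define u where "u = y - a *\<^sub>R f0"
  define v where "v = b *\<^sub>R f0 - y"
  have lu: "lf u = - a" unfolding u_def using assms by (simp add: lf.diff lf.scaleR)
  have lv: "lf v = b" unfolding v_def using assms by (simp add: lf.diff lf.scaleR)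
  have a0: "a \<le> 0" using lf_nonneg[OF assms(1)] lu unfolding u_def by simp
  have b0: "0 \<le> b" using lf_nonneg[OF assms(2)] lv unfolding v_def by simp
  show ?thesis
  proof (cases "b - a = 0")
    case True
    then have "a = 0" "b = 0" using a0 b0 by auto
    then have "y \<in> C" "- y \<in> C" using assms(1,2) by auto
    then have "y = 0" by (rule pointed)
    then show ?thesis using True by simp
  next
    case False
    then have ba: "b - a > 0" using a0 b0 by simp
    have "(b - a) *\<^sub>R y = b *\<^sub>R u + a *\<^sub>R v" unfolding u_def v_def by (simp add: algebra_simps)
    moreover have "norm ((b - a) *\<^sub>R y) = (b - a) * norm y" using ba by simp
    ultimately have "(b - a) * norm y \<le> b * norm u + (- a) * norm v"
      using norm_triangle_ineq[of "b *\<^sub>R u" "a *\<^sub>R v"] ba a0 b0 by simp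
    also have "\<dots> \<le> b * (K * lf u) + (- a) * (K * lf v)"
      using lf_C[OF assms(1)] lf_C[OF assms(2)] a0 b0 unfolding u_def v_def
      by (intro add_mono mult_left_mono) auto
    also have "\<dots> = K * (2 * (b * (- a)))" unfolding lu lv by (simp add: algebra_simps)
    also have "\<dots> \<le> K * ((b - a) * (b - a) / 2)"
    proof -
      have "0 \<le> (b + a) * (b + a)" by simp
      then have "2 * (b * (- a)) \<le> (b - a) * (b - a) / 2" by (simp add: algebra_simps)
      then show ?thesis using K0 by (intro mult_left_mono) auto
    qed
    finally have "(b - a) * norm y \<le> (b - a) * (K / 2 * (b - a))" by (simp add: algebra_simps)
    then show ?thesis using ba by simp
  qed
qed

end

context cs begin

lemma part1_pw:
  assumes T: "T \<in> operator_class C \<rho> \<theta>" and th1: "1 \<le> \<theta>"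
    and phi: "\<phi> \<in> normalized_part C \<rho> lf"
    and zS: "norm z \<le> S" and S: "S < \<rho> / (2 * \<theta>\<^sup>2 * K)"
  shows "norm ((1 / lf (T (\<phi> + z))) *\<^sub>R T (\<phi> + z) - (1 / lf (T \<phi>)) *\<^sub>R T \<phi>
           - (1 / lf (T \<phi>)) *\<^sub>R (T z - lf (T z) *\<^sub>R ((1 / lf (T \<phi>)) *\<^sub>R T \<phi>)))
         \<le> 2 * (K + 1) * K\<^sup>2 * \<theta> ^ 4 / \<rho>\<^sup>2 * S\<^sup>2"
proof -
  interpret T: bounded_linear T by (rule op_bl[OF T])
  define l0 where "l0 = \<rho> / (K * \<theta>)"
  define lam where "lam = lf (T \<phi>)"
  define mu where "mu = lf (T z)"
  define P where "P = T \<phi>"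
  define Z where "Z = T z"
  have th0: "0 < \<theta>" using th1 by simp
  have l00: "0 < l0" unfolding l0_def using rho0 K0 th0 by simp
  have lam_l0: "l0 \<le> lam" unfolding l0_def lam_def by (rule lambda_lower[OF T phi th1])
  have S0: "0 \<le> S" using zS norm_ge_zero order_trans by blast
  have nZ: "norm Z \<le> \<theta> * S" unfolding Z_def
    using op_norm[OF T, of z] zS th0 by (meson mult_left_mono less_imp_le order_trans)
  have mZ: "\<bar>mu\<bar> \<le> norm Z" unfolding mu_def Z_def by (rule lf_abs)
  have mS: "\<bar>mu\<bar> \<le> \<theta> * S" using mZ nZ by simp
  have tS: "\<theta> * S < l0 / 2"
  proof -
    have "\<theta> * S < \<theta> * (\<rho> / (2 * \<theta>\<^sup>2 * K))" using mult_strict_left_mono[OF S th0] .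
    also have "\<dots> = l0 / 2" unfolding l0_def using th0 K0 by (simp add: power2_eq_square field_simps)
    finally show ?thesis .
  qed
  have lam0: "0 < lam" using lam_l0 l00 by simp
  have lm: "lam / 2 \<le> lam + mu" using mS tS lam_l0 abs_ge_minus_self[of mu] by linarith
  have lm0: "0 < lam + mu" using lm lam0 by simp
  have nP: "norm P \<le> K * lam" unfolding P_def lam_def
    using lf_C[OF op_C[OF T]] phi rho_C unfolding normalized_part_def by blast
  have lfs: "lf (T (\<phi> + z)) = lam + mu" unfolding lam_def mu_def by (simp add: T.add lf.add)
  define c1 where "c1 = mu\<^sup>2 / (lam\<^sup>2 * (lam + mu))"
  define c2 where "c2 = mu / (lam * (lam + mu))"
  have eq: "(1 / lf (T (\<phi> + z))) *\<^sub>R T (\<phi> + z) - (1 / lf (T \<phi>)) *\<^sub>R T \<phi>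
           - (1 / lf (T \<phi>)) *\<^sub>R (T z - lf (T z) *\<^sub>R ((1 / lf (T \<phi>)) *\<^sub>R T \<phi>))
         = c1 *\<^sub>R P - c2 *\<^sub>R Z"
  proof -
    have "(1 / lf (T (\<phi> + z))) *\<^sub>R T (\<phi> + z) - (1 / lf (T \<phi>)) *\<^sub>R T \<phi>
           - (1 / lf (T \<phi>)) *\<^sub>R (T z - lf (T z) *\<^sub>R ((1 / lf (T \<phi>)) *\<^sub>R T \<phi>))
        = (1 / (lam + mu) - 1 / lam + mu / (lam * lam)) *\<^sub>R P + (1 / (lam + mu) - 1 / lam) *\<^sub>R Z"
      unfolding lfs unfolding lam_def mu_def P_def Z_def
      by (simp add: T.add algebra_simps scaleR_add_left scaleR_diff_left)
    also have "1 / (lam + mu) - 1 / lam + mu / (lam * lam) = c1"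
    proof -
      have n1: "lam \<noteq> 0" "lam + mu \<noteq> 0" using lam0 lm0 by auto
      have "(1 / (lam + mu) - 1 / lam + mu / (lam * lam)) * (lam * lam * (lam + mu)) = mu * mu"
      proof -
        have hh: "\<And>x y::real. x \<noteq> 0 \<Longrightarrow> 1 / x * (y * x) = y" by simp
        have t1: "1 / (lam + mu) * (lam * lam * (lam + mu)) = lam * lam" by (rule hh[OF n1(2)])
        have t2: "1 / lam * (lam * lam * (lam + mu)) = lam * (lam + mu)" using n1(1) by simp
        have t3: "mu / (lam * lam) * (lam * lam * (lam + mu)) = mu * (lam + mu)" using n1(1) by simp
        have dd: "\<And>A B Cc D::real. (A - B + Cc) * D = A * D - B * D + Cc * D" by (simp add: algebra_simps)
        show ?thesis unfolding dd t1 t2 t3 by (simp add: algebra_simps)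
      qed
      then show ?thesis unfolding c1_def using n1 by (simp add: power2_eq_square eq_divide_eq)
    qed
    also have "1 / (lam + mu) - 1 / lam = - c2"
      unfolding c2_def using lam0 lm0 by (simp add: field_simps)
    finally show ?thesis by simp
  qed
  have b1: "\<bar>c1\<bar> * norm P \<le> 2 * K * (\<theta> * S)\<^sup>2 / l0\<^sup>2"
  proof -
    have a1: "\<bar>c1\<bar> = mu\<^sup>2 / (lam\<^sup>2 * (lam + mu))" unfolding c1_def using lm0 lam0 by simp
    have a2: "mu\<^sup>2 / (lam\<^sup>2 * (lam + mu)) \<le> mu\<^sup>2 / (lam\<^sup>2 * (lam / 2))"
    proof (rule divide_left_mono)
      show "lam\<^sup>2 * (lam / 2) \<le> lam\<^sup>2 * (lam + mu)" using lm by (intro mult_left_mono) auto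
      show "0 < lam\<^sup>2 * (lam + mu) * (lam\<^sup>2 * (lam / 2))" using lam0 lm0 by simp
    qed simp
    have "\<bar>c1\<bar> * norm P \<le> mu\<^sup>2 / (lam\<^sup>2 * (lam / 2)) * (K * lam)"
      unfolding a1 using a2 nP lam0 by (intro mult_mono) auto
    also have "\<dots> = 2 * K * mu\<^sup>2 / lam\<^sup>2" using lam0 by (simp add: field_simps power2_eq_square)
    also have "\<dots> \<le> 2 * K * (\<theta> * S)\<^sup>2 / l0\<^sup>2"
    proof (intro divide_mono mult_left_mono)
      show "mu\<^sup>2 \<le> (\<theta> * S)\<^sup>2" using mS by (metis abs_ge_zero power2_abs power_mono)
      show "l0\<^sup>2 \<le> lam\<^sup>2" using lam_l0 l00 by (simp add: power_mono)
    qed (use K0 l00 in auto)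
    finally show ?thesis .
  qed
  have b2: "\<bar>c2\<bar> * norm Z \<le> 2 * (\<theta> * S)\<^sup>2 / l0\<^sup>2"
  proof -
    have a1: "\<bar>c2\<bar> = \<bar>mu\<bar> / (lam * (lam + mu))" unfolding c2_def using lm0 lam0 by (simp add: abs_div)
    have a2: "\<bar>mu\<bar> / (lam * (lam + mu)) \<le> \<bar>mu\<bar> / (lam * (lam / 2))"
    proof (rule divide_left_mono)
      show "lam * (lam / 2) \<le> lam * (lam + mu)" using lm lam0 by (intro mult_left_mono) auto
      show "0 < lam * (lam + mu) * (lam * (lam / 2))" using lam0 lm0 by simp
    qed simp
    have "\<bar>c2\<bar> * norm Z \<le> \<bar>mu\<bar> / (lam * (lam / 2)) * (\<theta> * S)"
      unfolding a1 using a2 nZ lam0 by (intro mult_mono) auto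
    also have "\<dots> = 2 * \<bar>mu\<bar> * (\<theta> * S) / lam\<^sup>2" using lam0 by (simp add: field_simps power2_eq_square)
    also have "\<dots> \<le> 2 * (\<theta> * S) * (\<theta> * S) / l0\<^sup>2"
    proof (intro divide_mono mult_right_mono mult_left_mono)
      show "l0\<^sup>2 \<le> lam\<^sup>2" using lam_l0 l00 by (simp add: power_mono)
    qed (use mS th0 S0 l00 in auto)
    also have "\<dots> = 2 * (\<theta> * S)\<^sup>2 / l0\<^sup>2" by (simp add: power2_eq_square)
    finally show ?thesis .
  qed
  have "norm (c1 *\<^sub>R P - c2 *\<^sub>R Z) \<le> \<bar>c1\<bar> * norm P + \<bar>c2\<bar> * norm Z"
    using norm_triangle_ineq4[of "c1 *\<^sub>R P" "c2 *\<^sub>R Z"] by simp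
  also have "\<dots> \<le> 2 * K * (\<theta> * S)\<^sup>2 / l0\<^sup>2 + 2 * (\<theta> * S)\<^sup>2 / l0\<^sup>2" using b1 b2 by simp
  also have "\<dots> = 2 * (K + 1) * K\<^sup>2 * \<theta> ^ 4 / \<rho>\<^sup>2 * S\<^sup>2"
    unfolding l0_def using rho0 K0 th0 by (simp add: field_simps power2_eq_square power4_eq_xxxx)
  finally show ?thesis unfolding eq .
qed

end

locale fs =
  fixes C :: "'e::banach set" and lf :: "'e \<Rightarrow> real" and K \<rho> \<theta> :: real
    and MM :: "('e \<Rightarrow> 'e) set" and M :: "'w measure" and \<tau> \<tau>i :: "'w \<Rightarrow> 'w"
    and LL :: "'w \<Rightarrow> 'e \<Rightarrow> 'e"
  assumes fset: "full_setting C lf K \<rho> \<theta> MM M \<tau> \<tau>i LL"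
begin

sublocale cs C lf K \<rho>
  using fset unfolding full_setting_def by unfold_locales blast

lemma th1: "1 \<le> \<theta>" and prob: "prob_space M"
  and tauiM: "\<And>\<omega>. \<omega> \<in> space M \<Longrightarrow> \<tau>i \<omega> \<in> space M"
  and opM: "\<And>\<omega>. \<omega> \<in> space M \<Longrightarrow> LL \<omega> \<in> operator_class C \<rho> \<theta>"
  and Lop_bm: "\<And>z. z \<in> Xsp M \<Longrightarrow> bochner_meas M (Lop M \<tau>i LL z)"
  using fset unfolding full_setting_def by blast+

lemma spne: "space M \<noteq> {}" using prob_space.not_empty[OF prob] .

lemma Xsp_bm: "z \<in> Xsp M \<Longrightarrow> bochner_meas M z" unfolding Xsp_def by blast
lemma Xsp_out: "z \<in> Xsp M \<Longrightarrow> \<omega> \<notin> space M \<Longrightarrow> z \<omega> = 0" unfolding Xsp_def by blast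
lemma Xsp_bdd: "z \<in> Xsp M \<Longrightarrow> bdd_above ((\<lambda>\<omega>. norm (z \<omega>)) ` space M)"
proof -
  assume "z \<in> Xsp M"
  then have "bounded (z ` space M)" unfolding Xsp_def by blast
  then obtain B where "\<forall>x\<in>z ` space M. norm x \<le> B" unfolding bounded_iff by blast
  then show ?thesis by (intro bdd_aboveI[of _ B]) auto
qed

lemma norm_le_supn: "z \<in> Xsp M \<Longrightarrow> \<omega> \<in> space M \<Longrightarrow> norm (z \<omega>) \<le> supn M z"
  unfolding supn_def by (rule cSUP_upper) (auto dest: Xsp_bdd)

lemma supn_le: "(\<And>\<omega>. \<omega> \<in> space M \<Longrightarrow> norm (z \<omega>) \<le> B) \<Longrightarrow> supn M z \<le> B"
  unfolding supn_def by (rule cSUP_least[OF spne])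

lemma supn_nonneg: "z \<in> Xsp M \<Longrightarrow> 0 \<le> supn M z"
proof -
  assume z: "z \<in> Xsp M"
  obtain \<omega> where "\<omega> \<in> space M" using spne by blast
  then show ?thesis using norm_le_supn[OF z] norm_ge_zero order_trans by blast
qed

lemma XspI:
  assumes "bochner_meas M z" "\<And>\<omega>. \<omega> \<in> space M \<Longrightarrow> norm (z \<omega>) \<le> B" "\<And>\<omega>. \<omega> \<notin> space M \<Longrightarrow> z \<omega> = 0"
  shows "z \<in> Xsp M"
  unfolding Xsp_def using assms by (auto simp: bounded_iff)

lemma Lop_in: "\<omega> \<in> space M \<Longrightarrow> Lop M \<tau>i LL z \<omega> = LL (\<tau>i \<omega>) (z (\<tau>i \<omega>))"
  unfolding Lop_def by simp
lemma Lop_out: "\<omega> \<notin> space M \<Longrightarrow> Lop M \<tau>i LL z \<omega> = 0"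
  unfolding Lop_def by simp

lemma part1:
  assumes phi: "\<phi> \<in> Xsp M" and z: "z \<in> Xsp M"
    and phin: "\<forall>\<omega>\<in>space M. \<phi> \<omega> \<in> normalized_part C \<rho> lf"
    and zs: "supn M z < \<rho> / (2 * \<theta>\<^sup>2 * K)"
  shows "supn M (\<lambda>\<omega>. piop M lf \<tau>i LL (\<lambda>\<omega>'. \<phi> \<omega>' + z \<omega>') \<omega> - piop M lf \<tau>i LL \<phi> \<omega>
                         - Qop M lf \<tau>i LL \<phi> z \<omega>)
            \<le> (2 * (K + 1) * K\<^sup>2 * \<theta> ^ 4 / \<rho>\<^sup>2) * (supn M z)\<^sup>2"
proof (rule supn_le)
  fix \<omega> assume w: "\<omega> \<in> space M"
  have w': "\<tau>i \<omega> \<in> space M" using tauiM[OF w] .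
  have "norm ((1 / lf (LL (\<tau>i \<omega>) (\<phi> (\<tau>i \<omega>) + z (\<tau>i \<omega>)))) *\<^sub>R LL (\<tau>i \<omega>) (\<phi> (\<tau>i \<omega>) + z (\<tau>i \<omega>))
       - (1 / lf (LL (\<tau>i \<omega>) (\<phi> (\<tau>i \<omega>)))) *\<^sub>R LL (\<tau>i \<omega>) (\<phi> (\<tau>i \<omega>))
       - (1 / lf (LL (\<tau>i \<omega>) (\<phi> (\<tau>i \<omega>)))) *\<^sub>R (LL (\<tau>i \<omega>) (z (\<tau>i \<omega>))
          - lf (LL (\<tau>i \<omega>) (z (\<tau>i \<omega>))) *\<^sub>R ((1 / lf (LL (\<tau>i \<omega>) (\<phi> (\<tau>i \<omega>)))) *\<^sub>R LL (\<tau>i \<omega>) (\<phi> (\<tau>i \<omega>)))))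
     \<le> 2 * (K + 1) * K\<^sup>2 * \<theta> ^ 4 / \<rho>\<^sup>2 * (supn M z)\<^sup>2"
    by (rule part1_pw[OF opM[OF w'] th1 phin[rule_format, OF w'] norm_le_supn[OF z w'] zs])
  then show "norm (piop M lf \<tau>i LL (\<lambda>\<omega>'. \<phi> \<omega>' + z \<omega>') \<omega> - piop M lf \<tau>i LL \<phi> \<omega>
                         - Qop M lf \<tau>i LL \<phi> z \<omega>)
            \<le> (2 * (K + 1) * K\<^sup>2 * \<theta> ^ 4 / \<rho>\<^sup>2) * (supn M z)\<^sup>2"
    unfolding Qop_def piop_def Lam_def Lop_in[OF w] by simp
qed

end

locale fsf = fs C lf K \<rho> \<theta> MM M \<tau> \<tau>i LL
  for C :: "'e::banach set" and lf K \<rho> \<theta> MM and M :: "'w measure" and \<tau> \<tau>i LL +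
  fixes f :: "'w \<Rightarrow> 'e"
  assumes fX: "f \<in> Xsp M"
    and fn: "\<forall>\<omega>\<in>space M. f \<omega> \<in> normalized_part C \<rho> lf"
    and ffix: "\<forall>\<omega>\<in>space M. piop M lf \<tau>i LL f \<omega> = f \<omega>"
begin

abbreviation Q where "Q \<equiv> Qop M lf \<tau>i LL f"
abbreviation eta where "eta \<equiv> eta_const C \<rho>"
definition lamf where "lamf \<omega> = lf (LL (\<tau>i \<omega>) (f (\<tau>i \<omega>)))"

lemma fn': "\<omega> \<in> space M \<Longrightarrow> f \<omega> \<in> rho_interior C \<rho>" "\<omega> \<in> space M \<Longrightarrow> f \<omega> \<noteq> 0"
  "\<omega> \<in> space M \<Longrightarrow> lf (f \<omega>) = 1" "\<omega> \<in> space M \<Longrightarrow> f \<omega> \<in> C"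
  using fn normalized_ne rho_C unfolding normalized_part_def by auto

lemma lam_low: "\<omega> \<in> space M \<Longrightarrow> \<rho> / (K * \<theta>) \<le> lamf \<omega>"
  unfolding lamf_def using lambda_lower[OF opM[OF tauiM] fn[rule_format, OF tauiM] th1] by simp

lemma l0pos: "0 < \<rho> / (K * \<theta>)" using rho0 K0 th1 by simp

lemma lam_pos: "\<omega> \<in> space M \<Longrightarrow> 0 < lamf \<omega>"
  using lam_low l0pos by (meson less_le_trans)

lemma Lam_f: "\<omega> \<in> space M \<Longrightarrow> Lam M lf \<tau>i LL f \<omega> = lamf \<omega>"
  unfolding Lam_def lamf_def Lop_def by simp

lemma Tf: "\<omega> \<in> space M \<Longrightarrow> LL (\<tau>i \<omega>) (f (\<tau>i \<omega>)) = lamf \<omega> *\<^sub>R f \<omega>"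
proof -
  assume w: "\<omega> \<in> space M"
  have "(1 / lamf \<omega>) *\<^sub>R LL (\<tau>i \<omega>) (f (\<tau>i \<omega>)) = f \<omega>"
    using ffix[rule_format, OF w] by (simp add: piop_def Lam_f[OF w] Lop_in[OF w])
  then have "lamf \<omega> *\<^sub>R ((1 / lamf \<omega>) *\<^sub>R LL (\<tau>i \<omega>) (f (\<tau>i \<omega>))) = lamf \<omega> *\<^sub>R f \<omega>" by simp
  then show ?thesis using lam_pos[OF w] by simp
qed

lemma piop_f: "piop M lf \<tau>i LL f \<omega> = f \<omega>"
proof (cases "\<omega> \<in> space M")
  case True then show ?thesis using ffix by blast
next
  case False then show ?thesis unfolding piop_def Lop_out[OF False] using Xsp_out[OF fX False] by simp
qed

lemma Q_in: "\<omega> \<in> space M \<Longrightarrow> Q g \<omega> =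
   (1 / lamf \<omega>) *\<^sub>R (LL (\<tau>i \<omega>) (g (\<tau>i \<omega>)) - lf (LL (\<tau>i \<omega>) (g (\<tau>i \<omega>))) *\<^sub>R f \<omega>)"
  unfolding Qop_def piop_f Lam_def Lop_in lamf_def by simp

lemma Q_out: "\<omega> \<notin> space M \<Longrightarrow> Q g \<omega> = 0"
  unfolding Qop_def Lam_def Lop_out by simp

lemma bl_in: "\<omega> \<in> space M \<Longrightarrow> bounded_linear (LL (\<tau>i \<omega>))"
  using op_bl[OF opM[OF tauiM]] .

definition U where "U \<omega> e = (1 / lamf \<omega>) *\<^sub>R (LL (\<tau>i \<omega>) e - lf (LL (\<tau>i \<omega>) e) *\<^sub>R f \<omega>)"

lemma U_bl: "\<omega> \<in> space M \<Longrightarrow> bounded_linear (U \<omega>)"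
  unfolding U_def
  by (intro bounded_linear_intros bl_in bounded_linear_compose[OF lf_bl] bounded_linear_scaleR_left) 

lemma Q_U: "\<omega> \<in> space M \<Longrightarrow> Q g \<omega> = U \<omega> (g (\<tau>i \<omega>))"
  unfolding Q_in U_def by simp

lemma Q_add: "Q (\<lambda>\<omega>. g \<omega> + h \<omega>) = (\<lambda>\<omega>. Q g \<omega> + Q h \<omega>)"
proof
  fix \<omega> show "Q (\<lambda>\<omega>. g \<omega> + h \<omega>) \<omega> = Q g \<omega> + Q h \<omega>"
    by (cases "\<omega> \<in> space M") (simp_all add: Q_U Q_out linear_add[OF bounded_linear.linear[OF U_bl]])
qed

lemma Q_scale: "Q (\<lambda>\<omega>. c *\<^sub>R g \<omega>) = (\<lambda>\<omega>. c *\<^sub>R Q g \<omega>)"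
proof
  fix \<omega> show "Q (\<lambda>\<omega>. c *\<^sub>R g \<omega>) \<omega> = c *\<^sub>R Q g \<omega>"
    by (cases "\<omega> \<in> space M") (simp_all add: Q_U Q_out linear_cmul[OF bounded_linear.linear[OF U_bl]])
qed

lemma Q_diff: "Q (\<lambda>\<omega>. g \<omega> - h \<omega>) = (\<lambda>\<omega>. Q g \<omega> - Q h \<omega>)"
proof
  fix \<omega> show "Q (\<lambda>\<omega>. g \<omega> - h \<omega>) \<omega> = Q g \<omega> - Q h \<omega>"
    by (cases "\<omega> \<in> space M") (simp_all add: Q_U Q_out linear_diff[OF bounded_linear.linear[OF U_bl]])
qed

lemma Qn_add: "(Q ^^ n) (\<lambda>\<omega>. g \<omega> + h \<omega>) = (\<lambda>\<omega>. (Q ^^ n) g \<omega> + (Q ^^ n) h \<omega>)"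
  by (induction n) (simp_all add: Q_add)

lemma Qn_scale: "(Q ^^ n) (\<lambda>\<omega>. c *\<^sub>R g \<omega>) = (\<lambda>\<omega>. c *\<^sub>R (Q ^^ n) g \<omega>)"
  by (induction n) (simp_all add: Q_scale)

lemma Qn_diff: "(Q ^^ n) (\<lambda>\<omega>. g \<omega> - h \<omega>) = (\<lambda>\<omega>. (Q ^^ n) g \<omega> - (Q ^^ n) h \<omega>)"
  by (induction n) (simp_all add: Q_diff)

lemma lfQ: "\<omega> \<in> space M \<Longrightarrow> lf (Q g \<omega>) = 0"
  unfolding Q_in using fn'(3) lam_pos by (simp add: lf.scaleR lf.diff)

end

context fsf begin

lemma inv_base:
  assumes z: "z \<in> Xsp M" and w: "\<omega> \<in> space M"
  shows "z \<omega> - (- (supn M z / \<rho>)) *\<^sub>R f \<omega> \<in> C \<and> (supn M z / \<rho>) *\<^sub>R f \<omega> - z \<omega> \<in> C"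
proof -
  define S where "S = supn M z"
  have zS: "norm (z \<omega>) \<le> S" unfolding S_def by (rule norm_le_supn[OF z w])
  have nf: "1 \<le> norm (f \<omega>)" using norm_normalized fn w by blast
  show ?thesis
  proof (cases "S = 0")
    case True
    then have "z \<omega> = 0" using zS by simp
    then show ?thesis using True zeroC unfolding S_def by simp
  next
    case False
    then have S0: "S > 0" using zS norm_ge_zero order_trans by (metis less_le)
    have ne: "norm ((\<rho> / S) *\<^sub>R z \<omega>) \<le> \<rho> * norm (f \<omega>)"
    proof -
      have "norm ((\<rho> / S) *\<^sub>R z \<omega>) = (\<rho> / S) * norm (z \<omega>)" using rho0 S0 by simp
      also have "\<dots> \<le> (\<rho> / S) * S" using zS rho0 S0 by (intro mult_left_mono) auto
      also have "\<dots> = \<rho>" using S0 by simp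
      also have "\<dots> \<le> \<rho> * norm (f \<omega>)" using nf rho0 by simp
      finally show ?thesis .
    qed
    have c1: "f \<omega> + (\<rho> / S) *\<^sub>R z \<omega> \<in> C" by (rule rho_cball[OF fn'(1,2)[OF w] ne])
    have c2: "f \<omega> + - ((\<rho> / S) *\<^sub>R z \<omega>) \<in> C" by (rule rho_cball[OF fn'(1,2)[OF w]]) (use ne in simp)
    have "(S / \<rho>) *\<^sub>R (f \<omega> + (\<rho> / S) *\<^sub>R z \<omega>) \<in> C" by (rule scaleC[OF c1]) (use S0 rho0 in simp)
    moreover have "(S / \<rho>) *\<^sub>R (f \<omega> + (\<rho> / S) *\<^sub>R z \<omega>) = z \<omega> - (- (S / \<rho>)) *\<^sub>R f \<omega>"
      using S0 rho0 by (simp add: scaleR_add_right)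
    moreover have "(S / \<rho>) *\<^sub>R (f \<omega> + - ((\<rho> / S) *\<^sub>R z \<omega>)) \<in> C" by (rule scaleC[OF c2]) (use S0 rho0 in simp)
    moreover have "(S / \<rho>) *\<^sub>R (f \<omega> + - ((\<rho> / S) *\<^sub>R z \<omega>)) = (S / \<rho>) *\<^sub>R f \<omega> - z \<omega>"
      using S0 rho0 by (simp add: scaleR_add_right scaleR_diff_right)
    ultimately show ?thesis unfolding S_def by simp
  qed
qed

lemma inv:
  assumes z: "z \<in> Xsp M"
  shows "\<forall>\<omega>\<in>space M. \<exists>a b. (Q ^^ n) z \<omega> - a *\<^sub>R f \<omega> \<in> C \<and> b *\<^sub>R f \<omega> - (Q ^^ n) z \<omega> \<in> C
           \<and> b - a \<le> eta ^ n * (2 * supn M z / \<rho>)"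
proof (induction n)
  case 0
  show ?case
  proof
    fix \<omega> assume w: "\<omega> \<in> space M"
    have "supn M z / \<rho> - - (supn M z / \<rho>) = 2 * supn M z / \<rho>" by simp
    then show "\<exists>a b. (Q ^^ 0) z \<omega> - a *\<^sub>R f \<omega> \<in> C \<and> b *\<^sub>R f \<omega> - (Q ^^ 0) z \<omega> \<in> C
           \<and> b - a \<le> eta ^ 0 * (2 * supn M z / \<rho>)"
      using inv_base[OF z w] by (intro exI[of _ "- (supn M z / \<rho>)"] exI[of _ "supn M z / \<rho>"]) simp
  qed
next
  case (Suc n)
  show ?case
  proof
    fix \<omega> assume w: "\<omega> \<in> space M"
    have w': "\<tau>i \<omega> \<in> space M" using tauiM[OF w] .
    define g where "g = (Q ^^ n) z"
    obtain a b where ab: "g (\<tau>i \<omega>) - a *\<^sub>R f (\<tau>i \<omega>) \<in> C" "b *\<^sub>R f (\<tau>i \<omega>) - g (\<tau>i \<omega>) \<in> C"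
      "b - a \<le> eta ^ n * (2 * supn M z / \<rho>)"
      using Suc.IH w' unfolding g_def by blast
    define T where "T = LL (\<tau>i \<omega>)"
    define lam where "lam = lamf \<omega>"
    obtain a' b' where ab': "(1/lam) *\<^sub>R T (g (\<tau>i \<omega>)) - a' *\<^sub>R f \<omega> \<in> C"
       "b' *\<^sub>R f \<omega> - (1/lam) *\<^sub>R T (g (\<tau>i \<omega>)) \<in> C" "b' - a' \<le> eta * (b - a)"
      using step[OF opM[OF w'] fn'(4,2)[OF w'] lam_pos[OF w] Tf[OF w] ab(1,2)]
      unfolding T_def lam_def by blast
    define m where "m = lf (T (g (\<tau>i \<omega>))) / lam"
    have Qg: "(Q ^^ Suc n) z \<omega> = (1/lam) *\<^sub>R T (g (\<tau>i \<omega>)) - m *\<^sub>R f \<omega>"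
      unfolding g_def funpow.simps comp_def Q_in[OF w] T_def lam_def m_def
      by (simp add: scaleR_diff_right)
    have "(Q ^^ Suc n) z \<omega> - (a' - m) *\<^sub>R f \<omega> \<in> C" unfolding Qg using ab'(1) by (simp add: algebra_simps)
    moreover have "(b' - m) *\<^sub>R f \<omega> - (Q ^^ Suc n) z \<omega> \<in> C" unfolding Qg using ab'(2) by (simp add: algebra_simps)
    moreover have "(b' - m) - (a' - m) \<le> eta ^ Suc n * (2 * supn M z / \<rho>)"
    proof -
      have "(b' - m) - (a' - m) \<le> eta * (b - a)" using ab'(3) by simp
      also have "\<dots> \<le> eta * (eta ^ n * (2 * supn M z / \<rho>))" using ab(3) eta_ge0 by (intro mult_left_mono) auto
      finally show ?thesis by simp
    qed
    ultimately show "\<exists>a b. (Q ^^ Suc n) z \<omega> - a *\<^sub>R f \<omega> \<in> C \<and> b *\<^sub>R f \<omega> - (Q ^^ Suc n) z \<omega> \<in> C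
           \<and> b - a \<le> eta ^ Suc n * (2 * supn M z / \<rho>)" by blast
  qed
qed

lemma K_rho: "1 \<le> K / \<rho>" using K1 rho1 rho0 by (simp add: field_simps)

lemma Qn_bound:
  assumes z: "z \<in> Xsp M" and w: "\<omega> \<in> space M"
  shows "norm ((Q ^^ n) z \<omega>) \<le> (K / \<rho>) * supn M z * eta ^ n"
proof (cases n)
  case 0
  have "norm (z \<omega>) \<le> supn M z" by (rule norm_le_supn[OF z w])
  also have "\<dots> \<le> (K / \<rho>) * supn M z" using mult_right_mono[OF K_rho supn_nonneg[OF z]] by simp
  finally show ?thesis using 0 by simp
next
  case (Suc m)
  obtain a b where ab: "(Q ^^ n) z \<omega> - a *\<^sub>R f \<omega> \<in> C" "b *\<^sub>R f \<omega> - (Q ^^ n) z \<omega> \<in> C"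
      "b - a \<le> eta ^ n * (2 * supn M z / \<rho>)"
    using inv[OF z] w by blast
  have lf0: "lf ((Q ^^ n) z \<omega>) = 0" unfolding Suc funpow.simps comp_def by (rule lfQ[OF w])
  have "norm ((Q ^^ n) z \<omega>) \<le> K / 2 * (b - a)" by (rule normb[OF ab(1,2) lf0 fn'(3)[OF w]])
  also have "\<dots> \<le> K / 2 * (eta ^ n * (2 * supn M z / \<rho>))" using ab(3) K0 by (intro mult_left_mono) auto
  also have "\<dots> = (K / \<rho>) * supn M z * eta ^ n" by (simp add: field_simps)
  finally show ?thesis .
qed

end

context fsf begin

definition l0 where "l0 = \<rho> / (K * \<theta>)"

lemma Q_Xsp:
  assumes g: "g \<in> Xsp M"
  shows "Q g \<in> Xsp M"
proof -
  define S where "S = supn M g"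
  have th0: "0 < \<theta>" using th1 by simp
  have l0: "0 < l0" unfolding l0_def using l0pos .
  have Tn: "norm (Lop M \<tau>i LL g \<omega>) \<le> \<theta> * S" if w: "\<omega> \<in> space M" for \<omega>
  proof -
    have "norm (Lop M \<tau>i LL g \<omega>) \<le> \<theta> * norm (g (\<tau>i \<omega>))"
      unfolding Lop_in[OF w] by (rule op_norm[OF opM[OF tauiM[OF w]]])
    also have "\<dots> \<le> \<theta> * S" unfolding S_def
      using norm_le_supn[OF g tauiM[OF w]] th0 by (intro mult_left_mono) auto
    finally show ?thesis .
  qed
  have h1n: "\<bar>lf (Lop M \<tau>i LL g \<omega>)\<bar> \<le> \<theta> * S" if w: "\<omega> \<in> space M" for \<omega>
    using lf_abs Tn[OF w] order_trans by blast
  have fK: "norm (f \<omega>) \<le> K" if w: "\<omega> \<in> space M" for \<omega>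
    using lf_C[OF fn'(4)[OF w]] fn'(3)[OF w] by simp
  have h2n: "norm (lf (Lop M \<tau>i LL g \<omega>) *\<^sub>R f \<omega>) \<le> \<theta> * S * K" if w: "\<omega> \<in> space M" for \<omega>
    using h1n[OF w] fK[OF w] by (simp add: mult_mono')
  have h3n: "norm (Lop M \<tau>i LL g \<omega> - lf (Lop M \<tau>i LL g \<omega>) *\<^sub>R f \<omega>) \<le> \<theta> * S + \<theta> * S * K"
    if w: "\<omega> \<in> space M" for \<omega>
    using norm_triangle_ineq4[of "Lop M \<tau>i LL g \<omega>" "lf (Lop M \<tau>i LL g \<omega>) *\<^sub>R f \<omega>"] Tn[OF w] h2n[OF w]
    by linarith
  have lamLop: "lf (Lop M \<tau>i LL f \<omega>) = lamf \<omega>" if w: "\<omega> \<in> space M" for \<omega>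
    unfolding Lop_in[OF w] lamf_def ..
  have iln: "\<bar>1 / lamf \<omega>\<bar> \<le> 1 / l0" if w: "\<omega> \<in> space M" for \<omega>
    using lam_low[OF w] l0 unfolding l0_def[symmetric] by (simp add: frac_le)
  have bm1: "bochner_meas M (\<lambda>\<omega>. lf (Lop M \<tau>i LL g \<omega>))"
    by (rule bm_linear[OF Lop_bm[OF g] lf_bl]) simp
  have bm2: "bochner_meas M (\<lambda>\<omega>. lf (Lop M \<tau>i LL g \<omega>) *\<^sub>R f \<omega>)"
    by (rule bm_scaleR[OF bm1 Xsp_bm[OF fX]]) (use h1n fK in auto)
  have bm3: "bochner_meas M (\<lambda>\<omega>. Lop M \<tau>i LL g \<omega> - lf (Lop M \<tau>i LL g \<omega>) *\<^sub>R f \<omega>)"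
    by (rule bm_diff[OF Lop_bm[OF g] bm2]) simp
  have bm4: "bochner_meas M (\<lambda>\<omega>. lf (Lop M \<tau>i LL f \<omega>))"
    by (rule bm_linear[OF Lop_bm[OF fX] lf_bl]) simp
  have bm5: "bochner_meas M (\<lambda>\<omega>. 1 / lamf \<omega>)"
    by (rule bm_inverse[OF bm4 l0]) (use lamLop lam_low in \<open>auto simp: l0_def\<close>)
  have bmQ: "bochner_meas M (Q g)"
    by (rule bm_scaleR[OF bm5 bm3]) (use iln h3n in \<open>auto simp: Q_in Lop_in\<close>)
  show ?thesis
  proof (rule XspI[OF bmQ])
    fix \<omega> assume w: "\<omega> \<in> space M"
    have "norm (Q g \<omega>) = \<bar>1 / lamf \<omega>\<bar> * norm (Lop M \<tau>i LL g \<omega> - lf (Lop M \<tau>i LL g \<omega>) *\<^sub>R f \<omega>)"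
      unfolding Q_in[OF w] Lop_in[OF w] by simp
    also have "\<dots> \<le> 1 / l0 * (\<theta> * S + \<theta> * S * K)"
      using iln[OF w] h3n[OF w] l0 by (intro mult_mono) auto
    finally show "norm (Q g \<omega>) \<le> 1 / l0 * (\<theta> * S + \<theta> * S * K)" .
  qed (rule Q_out)
qed

lemma Qn_Xsp: "z \<in> Xsp M \<Longrightarrow> (Q ^^ n) z \<in> Xsp M"
  by (induction n) (simp_all add: Q_Xsp)

definition R where "R z = (\<lambda>\<omega>. if \<omega> \<in> space M then (\<Sum>n. (Q ^^ n) z \<omega>) else 0)"

lemma eta_abs: "norm eta < 1" using eta_ge0 eta_lt1 by (simp add: abs_of_nonneg)

lemma geo_summ: "summable (\<lambda>n. c * eta ^ n)"
  by (rule summable_mult) (rule summable_geometric[OF eta_abs])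

lemma summ:
  assumes z: "z \<in> Xsp M" and w: "\<omega> \<in> space M"
  shows "summable (\<lambda>n. (Q ^^ n) z \<omega>)"
  by (rule summable_comparison_test'[OF geo_summ[of "K / \<rho> * supn M z"]]) (rule Qn_bound[OF z w])

lemma Qn_tendsto:
  assumes z: "z \<in> Xsp M" and w: "\<omega> \<in> space M"
  shows "(\<lambda>n. (Q ^^ n) z \<omega>) \<longlonglongrightarrow> 0"
proof (rule Lim_null_comparison)
  show "\<forall>\<^sub>F n in sequentially. norm ((Q ^^ n) z \<omega>) \<le> K / \<rho> * supn M z * eta ^ n"
    using Qn_bound[OF z w] by simp
  show "(\<lambda>n. K / \<rho> * supn M z * eta ^ n) \<longlonglongrightarrow> 0"
    by (intro tendsto_mult_right_zero LIMSEQ_power_zero) (use eta_abs in simp)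
qed

lemma tail_bound:
  assumes z: "z \<in> Xsp M" and w: "\<omega> \<in> space M"
  shows "norm (\<Sum>n. (Q ^^ (n + N)) z \<omega>) \<le> K / \<rho> * supn M z / (1 - eta) * eta ^ N"
proof -
  have s: "summable (\<lambda>n. (K / \<rho> * supn M z * eta ^ N) * eta ^ n)" by (rule geo_summ)
  have "norm (\<Sum>n. (Q ^^ (n + N)) z \<omega>) \<le> (\<Sum>n. (K / \<rho> * supn M z * eta ^ N) * eta ^ n)"
  proof (rule norm_suminf_le[OF _ s])
    fix n show "norm ((Q ^^ (n + N)) z \<omega>) \<le> K / \<rho> * supn M z * eta ^ N * eta ^ n"
      using Qn_bound[OF z w, of "n + N"] by (simp add: power_add mult_ac)
  qed
  also have "\<dots> = K / \<rho> * supn M z * eta ^ N * (1 / (1 - eta))"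
    using suminf_mult[of "\<lambda>n. eta ^ n" "K / \<rho> * supn M z * eta ^ N"]
      suminf_geometric[OF eta_abs] summable_geometric[OF eta_abs] by simp
  finally show ?thesis by simp
qed

lemma R_Xsp:
  assumes z: "z \<in> Xsp M"
  shows "R z \<in> Xsp M"
proof -
  define S where "S = supn M z"
  have e1: "0 < 1 - eta" using eta_lt1 by simp
  have bmR: "bochner_meas M (R z)"
  proof (rule bm_uniform_limit[where u="\<lambda>N \<omega>. \<Sum>n<N. (Q ^^ n) z \<omega>"])
    show "bochner_meas M (\<lambda>\<omega>. \<Sum>n<N. (Q ^^ n) z \<omega>)" for N
      by (rule bm_sum) (rule Xsp_bm[OF Qn_Xsp[OF z]])
    show "\<forall>\<epsilon>>0. \<exists>N. \<forall>\<omega>\<in>space M. norm ((\<Sum>n<N. (Q ^^ n) z \<omega>) - R z \<omega>) < \<epsilon>"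
    proof (intro allI impI)
      fix \<epsilon> :: real assume e: "\<epsilon> > 0"
      have "(\<lambda>N. K / \<rho> * S / (1 - eta) * eta ^ N) \<longlonglongrightarrow> 0"
        by (intro tendsto_mult_right_zero LIMSEQ_power_zero) (use eta_abs in simp)
      then have "\<forall>\<^sub>F N in sequentially. K / \<rho> * S / (1 - eta) * eta ^ N < \<epsilon>"
        using e by (rule order_tendstoD(2))
      then obtain N where N: "K / \<rho> * S / (1 - eta) * eta ^ N < \<epsilon>"
        unfolding eventually_sequentially by blast
      show "\<exists>N. \<forall>\<omega>\<in>space M. norm ((\<Sum>n<N. (Q ^^ n) z \<omega>) - R z \<omega>) < \<epsilon>"
      proof (intro exI ballI)
        fix \<omega> assume w: "\<omega> \<in> space M"
        have "R z \<omega> = (\<Sum>n. (Q ^^ (n + N)) z \<omega>) + (\<Sum>n<N. (Q ^^ n) z \<omega>)"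
          unfolding R_def using w suminf_split_initial_segment[OF summ[OF z w], of N] by simp
        then have "norm ((\<Sum>n<N. (Q ^^ n) z \<omega>) - R z \<omega>) = norm (\<Sum>n. (Q ^^ (n + N)) z \<omega>)"
          by (simp add: norm_minus_commute)
        also have "\<dots> \<le> K / \<rho> * S / (1 - eta) * eta ^ N" unfolding S_def by (rule tail_bound[OF z w])
        finally show "norm ((\<Sum>n<N. (Q ^^ n) z \<omega>) - R z \<omega>) < \<epsilon>" using N by simp
      qed
    qed
  qed
  show ?thesis
  proof (rule XspI[OF bmR])
    fix \<omega> assume w: "\<omega> \<in> space M"
    have "norm (R z \<omega>) = norm (\<Sum>n. (Q ^^ (n + 0)) z \<omega>)" unfolding R_def using w by simp
    also have "\<dots> \<le> K / \<rho> * supn M z / (1 - eta) * eta ^ 0" by (rule tail_bound[OF z w])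
    finally show "norm (R z \<omega>) \<le> K / \<rho> * supn M z / (1 - eta)" by simp
  qed (simp add: R_def)
qed

lemma R_bound:
  assumes z: "z \<in> Xsp M"
  shows "supn M (R z) \<le> (1 + (K / \<rho>) / (1 - eta)) * supn M z"
proof (rule supn_le)
  fix \<omega> assume w: "\<omega> \<in> space M"
  define S where "S = supn M z"
  have S0: "0 \<le> S" unfolding S_def by (rule supn_nonneg[OF z])
  have e1: "0 < 1 - eta" using eta_lt1 by simp
  have "R z \<omega> = z \<omega> + (\<Sum>n. (Q ^^ (n + 1)) z \<omega>)"
    unfolding R_def using w suminf_split_initial_segment[OF summ[OF z w], of 1] by simp
  then have "norm (R z \<omega>) \<le> norm (z \<omega>) + norm (\<Sum>n. (Q ^^ (n + 1)) z \<omega>)"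
    by (simp add: norm_triangle_ineq)
  also have "\<dots> \<le> S + K / \<rho> * S / (1 - eta) * eta ^ 1"
    using norm_le_supn[OF z w] tail_bound[OF z w, of 1] unfolding S_def by (intro add_mono) auto
  also have "\<dots> \<le> S + K / \<rho> * S / (1 - eta)"
  proof -
    have "0 \<le> K / \<rho> * S / (1 - eta)" using K0 rho0 S0 e1 by simp
    then have "K / \<rho> * S / (1 - eta) * eta \<le> K / \<rho> * S / (1 - eta)"
      using eta_lt1 by (intro mult_left_le) auto
    then show ?thesis by simp
  qed
  also have "\<dots> = (1 + (K / \<rho>) / (1 - eta)) * S" by (simp add: algebra_simps)
  finally show "norm (R z \<omega>) \<le> (1 + (K / \<rho>) / (1 - eta)) * supn M z" unfolding S_def .
qed

lemma R_add:
  assumes z: "z \<in> Xsp M" and w: "w \<in> Xsp M"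
  shows "R (\<lambda>\<omega>. z \<omega> + w \<omega>) = (\<lambda>\<omega>. R z \<omega> + R w \<omega>)"
proof
  fix \<omega> show "R (\<lambda>\<omega>. z \<omega> + w \<omega>) \<omega> = R z \<omega> + R w \<omega>"
    unfolding R_def Qn_add using suminf_add[OF summ[OF z] summ[OF w]] by auto
qed

lemma R_scale:
  assumes z: "z \<in> Xsp M"
  shows "R (\<lambda>\<omega>. c *\<^sub>R z \<omega>) = (\<lambda>\<omega>. c *\<^sub>R R z \<omega>)"
proof
  fix \<omega> show "R (\<lambda>\<omega>. c *\<^sub>R z \<omega>) \<omega> = c *\<^sub>R R z \<omega>"
    unfolding R_def Qn_scale
    using bounded_linear.suminf[OF bounded_linear_scaleR_right summ[OF z], of \<omega> c] by auto
qed

lemma R_left: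
  assumes z: "z \<in> Xsp M"
  shows "R (\<lambda>\<omega>. z \<omega> - Q z \<omega>) = z"
proof
  fix \<omega> show "R (\<lambda>\<omega>. z \<omega> - Q z \<omega>) \<omega> = z \<omega>"
  proof (cases "\<omega> \<in> space M")
    case False then show ?thesis unfolding R_def using Xsp_out[OF z False] by simp
  next
    case w: True
    have eq: "(Q ^^ n) (\<lambda>\<omega>. z \<omega> - Q z \<omega>) \<omega> = (Q ^^ n) z \<omega> - (Q ^^ Suc n) z \<omega>" for n
      unfolding Qn_diff by (simp add: funpow_Suc_right del: funpow.simps)
    have "(\<lambda>n. (Q ^^ Suc n) z \<omega> - (Q ^^ n) z \<omega>) sums (0 - (Q ^^ 0) z \<omega>)"
      by (rule telescope_sums[OF Qn_tendsto[OF z w]])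
    then have "(\<lambda>n. - ((Q ^^ Suc n) z \<omega> - (Q ^^ n) z \<omega>)) sums (- (0 - (Q ^^ 0) z \<omega>))"
      by (rule sums_minus)
    then have "(\<lambda>n. (Q ^^ n) (\<lambda>\<omega>. z \<omega> - Q z \<omega>) \<omega>) sums z \<omega>" unfolding eq by simp
    then show ?thesis unfolding R_def using w by (simp add: sums_iff)
  qed
qed

lemma R_right:
  assumes z: "z \<in> Xsp M"
  shows "(\<lambda>\<omega>. R z \<omega> - Q (R z) \<omega>) = z"
proof
  fix \<omega> show "R z \<omega> - Q (R z) \<omega> = z \<omega>"
  proof (cases "\<omega> \<in> space M")
    case False then show ?thesis unfolding R_def using Xsp_out[OF z False] Q_out[OF False] by simp
  next
    case w: True
    have w': "\<tau>i \<omega> \<in> space M" using tauiM[OF w] .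
    have "Q (R z) \<omega> = U \<omega> (\<Sum>n. (Q ^^ n) z (\<tau>i \<omega>))" unfolding Q_U[OF w] R_def using w' by simp
    also have "\<dots> = (\<Sum>n. U \<omega> ((Q ^^ n) z (\<tau>i \<omega>)))"
      by (rule bounded_linear.suminf[OF U_bl[OF w] summ[OF z w']])
    also have "\<dots> = (\<Sum>n. (Q ^^ Suc n) z \<omega>)" unfolding funpow.simps comp_def Q_U[OF w] ..
    also have "\<dots> = R z \<omega> - (Q ^^ 0) z \<omega>" unfolding R_def using w suminf_split_head[OF summ[OF z w]] by simp
    finally show ?thesis by simp
  qed
qed

end

theorem lemma2p3:
  fixes \<rho> K \<theta> :: real
  assumes "0 < \<rho>" "\<rho> \<le> 1" "1 \<le> K" "1 \<le> \<theta>"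
  shows
   "(\<exists>Cst>0. \<forall>(C :: 'e::banach set) lf \<M> (M :: 'w measure) \<tau> \<tau>i \<L>.
       full_setting C lf K \<rho> \<theta> \<M> M \<tau> \<tau>i \<L> \<longrightarrow>
       (\<forall>\<phi>\<in>Xsp M. \<forall>z\<in>Xsp M.
          (\<forall>\<omega>\<in>space M. \<phi> \<omega> \<in> normalized_part C \<rho> lf) \<and> supn M z < \<rho> / (2 * \<theta>\<^sup>2 * K) \<longrightarrow>
          supn M (\<lambda>\<omega>. piop M lf \<tau>i \<L> (\<lambda>\<omega>'. \<phi> \<omega>' + z \<omega>') \<omega> - piop M lf \<tau>i \<L> \<phi> \<omega>
                         - Qop M lf \<tau>i \<L> \<phi> z \<omega>)
            \<le> Cst * (supn M z)\<^sup>2))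
    \<and>
    (\<forall>(C :: 'e::banach set) lf \<M> (M :: 'w measure) \<tau> \<tau>i \<L>.
       full_setting C lf K \<rho> \<theta> \<M> M \<tau> \<tau>i \<L> \<longrightarrow>
       (\<forall>f\<in>Xsp M.
          (\<forall>\<omega>\<in>space M. f \<omega> \<in> normalized_part C \<rho> lf) \<and>
          (\<forall>\<omega>\<in>space M. piop M lf \<tau>i \<L> f \<omega> = f \<omega>) \<longrightarrow>
          (\<exists>R. (\<forall>z\<in>Xsp M. R z \<in> Xsp M) \<and>
               (\<forall>z\<in>Xsp M. \<forall>w\<in>Xsp M. R (\<lambda>\<omega>. z \<omega> + w \<omega>) = (\<lambda>\<omega>. R z \<omega> + R w \<omega>)) \<and>
               (\<forall>z\<in>Xsp M. \<forall>c. R (\<lambda>\<omega>. c *\<^sub>R z \<omega>) = (\<lambda>\<omega>. c *\<^sub>R R z \<omega>)) \<and>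
               (\<forall>z\<in>Xsp M. R (\<lambda>\<omega>. z \<omega> - Qop M lf \<tau>i \<L> f z \<omega>) = z) \<and>
               (\<forall>z\<in>Xsp M. (\<lambda>\<omega>. R z \<omega> - Qop M lf \<tau>i \<L> f (R z) \<omega>) = z) \<and>
               (\<forall>z\<in>Xsp M. supn M (R z) \<le> (1 + (K / \<rho>) / (1 - eta_const C \<rho>)) * supn M z))))"
proof (rule conjI)
  show "\<exists>Cst>0. \<forall>(C :: 'e::banach set) lf \<M> (M :: 'w measure) \<tau> \<tau>i \<L>.
       full_setting C lf K \<rho> \<theta> \<M> M \<tau> \<tau>i \<L> \<longrightarrow>
       (\<forall>\<phi>\<in>Xsp M. \<forall>z\<in>Xsp M.
          (\<forall>\<omega>\<in>space M. \<phi> \<omega> \<in> normalized_part C \<rho> lf) \<and> supn M z < \<rho> / (2 * \<theta>\<^sup>2 * K) \<longrightarrow>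
          supn M (\<lambda>\<omega>. piop M lf \<tau>i \<L> (\<lambda>\<omega>'. \<phi> \<omega>' + z \<omega>') \<omega> - piop M lf \<tau>i \<L> \<phi> \<omega>
                         - Qop M lf \<tau>i \<L> \<phi> z \<omega>)
            \<le> Cst * (supn M z)\<^sup>2)"
  proof (rule exI[of _ "2 * (K + 1) * K\<^sup>2 * \<theta> ^ 4 / \<rho>\<^sup>2"], intro conjI allI impI ballI)
    show "0 < 2 * (K + 1) * K\<^sup>2 * \<theta> ^ 4 / \<rho>\<^sup>2" using assms by simp
    fix C :: "'e::banach set" and lf \<M> and M :: "'w measure" and \<tau> \<tau>i \<L> and \<phi> z :: "'w \<Rightarrow> 'e"
    assume H: "full_setting C lf K \<rho> \<theta> \<M> M \<tau> \<tau>i \<L>" and phi: "\<phi> \<in> Xsp M" and z: "z \<in> Xsp M"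
      and c: "(\<forall>\<omega>\<in>space M. \<phi> \<omega> \<in> normalized_part C \<rho> lf) \<and> supn M z < \<rho> / (2 * \<theta>\<^sup>2 * K)"
    interpret fs C lf K \<rho> \<theta> \<M> M \<tau> \<tau>i \<L> by unfold_locales (rule H)
    show "supn M (\<lambda>\<omega>. piop M lf \<tau>i \<L> (\<lambda>\<omega>'. \<phi> \<omega>' + z \<omega>') \<omega> - piop M lf \<tau>i \<L> \<phi> \<omega>
                         - Qop M lf \<tau>i \<L> \<phi> z \<omega>)
            \<le> 2 * (K + 1) * K\<^sup>2 * \<theta> ^ 4 / \<rho>\<^sup>2 * (supn M z)\<^sup>2"
      using part1[OF phi z] c by blast
  qed
next
  show "\<forall>(C :: 'e::banach set) lf \<M> (M :: 'w measure) \<tau> \<tau>i \<L>.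
       full_setting C lf K \<rho> \<theta> \<M> M \<tau> \<tau>i \<L> \<longrightarrow>
       (\<forall>f\<in>Xsp M.
          (\<forall>\<omega>\<in>space M. f \<omega> \<in> normalized_part C \<rho> lf) \<and>
          (\<forall>\<omega>\<in>space M. piop M lf \<tau>i \<L> f \<omega> = f \<omega>) \<longrightarrow>
          (\<exists>R. (\<forall>z\<in>Xsp M. R z \<in> Xsp M) \<and>
               (\<forall>z\<in>Xsp M. \<forall>w\<in>Xsp M. R (\<lambda>\<omega>. z \<omega> + w \<omega>) = (\<lambda>\<omega>. R z \<omega> + R w \<omega>)) \<and>
               (\<forall>z\<in>Xsp M. \<forall>c. R (\<lambda>\<omega>. c *\<^sub>R z \<omega>) = (\<lambda>\<omega>. c *\<^sub>R R z \<omega>)) \<and>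
               (\<forall>z\<in>Xsp M. R (\<lambda>\<omega>. z \<omega> - Qop M lf \<tau>i \<L> f z \<omega>) = z) \<and>
               (\<forall>z\<in>Xsp M. (\<lambda>\<omega>. R z \<omega> - Qop M lf \<tau>i \<L> f (R z) \<omega>) = z) \<and>
               (\<forall>z\<in>Xsp M. supn M (R z) \<le> (1 + (K / \<rho>) / (1 - eta_const C \<rho>)) * supn M z)))"
  proof (intro allI impI ballI)
    fix C :: "'e::banach set" and lf \<M> and M :: "'w measure" and \<tau> \<tau>i \<L> and f :: "'w \<Rightarrow> 'e"
    assume H: "full_setting C lf K \<rho> \<theta> \<M> M \<tau> \<tau>i \<L>" and fX: "f \<in> Xsp M"
      and c: "(\<forall>\<omega>\<in>space M. f \<omega> \<in> normalized_part C \<rho> lf) \<and>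
          (\<forall>\<omega>\<in>space M. piop M lf \<tau>i \<L> f \<omega> = f \<omega>)"
    interpret fsf C lf K \<rho> \<theta> \<M> M \<tau> \<tau>i \<L> f
      by (intro fsf.intro fsf_axioms.intro fs.intro H fX) (use c in auto)
    show "\<exists>R. (\<forall>z\<in>Xsp M. R z \<in> Xsp M) \<and>
               (\<forall>z\<in>Xsp M. \<forall>w\<in>Xsp M. R (\<lambda>\<omega>. z \<omega> + w \<omega>) = (\<lambda>\<omega>. R z \<omega> + R w \<omega>)) \<and>
               (\<forall>z\<in>Xsp M. \<forall>c. R (\<lambda>\<omega>. c *\<^sub>R z \<omega>) = (\<lambda>\<omega>. c *\<^sub>R R z \<omega>)) \<and>
               (\<forall>z\<in>Xsp M. R (\<lambda>\<omega>. z \<omega> - Qop M lf \<tau>i \<L> f z \<omega>) = z) \<and>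
               (\<forall>z\<in>Xsp M. (\<lambda>\<omega>. R z \<omega> - Qop M lf \<tau>i \<L> f (R z) \<omega>) = z) \<and>
               (\<forall>z\<in>Xsp M. supn M (R z) \<le> (1 + (K / \<rho>) / (1 - eta_const C \<rho>)) * supn M z)"
      using R_Xsp R_add R_scale R_left R_right R_bound by blast
  qed
qed

end
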